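(* For all $m,n\ge 1$ one has $K_{m,n}(x,y)=K_{m,n}(y,x)$.
   Context: Let $m,n\ge 1$. $K_{m,n}$ is the complete bipartite graph with vertex set $V=A_m\sqcup B_n$, $A_m=\{a_1,\dots,a_m\}$, $B_n=\{b_1,\dots,b_n\}$, with exactly one edge $\{a_i,b_j\}$ for every $i,j$; $a_m$ is the sink. A configuration is a function $u:V\to\mathbb Z$; $\mathrm{degree}(u)=\sum_c u_c$. For $c\in V$ with graph degree $d_c$, $\Delta^{(c)}=d_c e_c-\sum_{c'\text{ adjacent to }c}e_{c'}$ ($e_c$ the indicator of $c$), $\Delta^{(C)}=\sum_{c\in C}\Delta^{(c)}$. Toppling equivalence: difference in the integer span of the $\Delta^{(c)}$; effective: toppling equivalent to a non-negative configuration; $\mathrm{rank}(u)=-1+\min\{\mathrm{degree}(f): f\ge0,\ u-f\text{ not effective}\}$. $u$ is parking if $u_c\ge0$ for $c\ne a_m$ and for every non-empty $C\subseteq V\setminus\{a_m\}$, $u-\Delta^{(C)}$ has a negative value at a vertex other than $a_m$; sorted if $u_{a_1}\le\dots\le u_{a_{m-1}}$ and $u_{b_1}\le\dots\le u_{b_n}$ (no condition at the sink). For a parking sorted $u$ set $\mathrm{xpara}(u)=(m-1)(n-1)+\mathrm{rank}(u)-\mathrm{degree}(u)$ and $\mathrm{ypara}(u)=\mathrm{rank}(u)+1$ (both are non-negative integers). Define the formal power series $K_{m,n}(x,y)=\sum_u x^{\mathrm{xpara}(u)}y^{\mathrm{ypara}(u)}$, the sum over all parking sorted configurations $u$ on $K_{m,n}$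 (all sink values allowed); equivalently $K_{m,n}(x,y)=x^{(m-1)(n-1)}y\,\widetilde K_{m,n}(x^{-1},xy)$ where $\widetilde K_{m,n}(d,r)=\sum_u d^{\mathrm{degree}(u)}r^{\mathrm{rank}(u)}$. *)

theory Defs
  imports Main
begin

datatype vert = A nat | B nat

definition V :: "nat \<Rightarrow> nat \<Rightarrow> vert set" where
  "V m n = A ` {1..m} \<union> B ` {1..n}"

definition sink :: "nat \<Rightarrow> vert" where
  "sink m = A m"

fun adj :: "nat \<Rightarrow> nat \<Rightarrow> vert \<Rightarrow> vert \<Rightarrow> bool" where
  "adj m n (A i) (B j) = (1 \<le> i \<and> i \<le> m \<and> 1 \<le> j \<and> j \<le> n)"
| "adj m n (B j) (A i) = (1 \<le> i \<and> i \<le> m \<and> 1 \<le> j \<and> j \<le> n)"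
| "adj m n _ _ = False"

fun gdeg :: "nat \<Rightarrow> nat \<Rightarrow> vert \<Rightarrow> int" where
  "gdeg m n (A i) = int n"
| "gdeg m n (B j) = int m"

definition config :: "nat \<Rightarrow> nat \<Rightarrow> (vert \<Rightarrow> int) \<Rightarrow> bool" where
  "config m n u \<longleftrightarrow> (\<forall>c. c \<notin> V m n \<longrightarrow> u c = 0)"

definition degree :: "nat \<Rightarrow> nat \<Rightarrow> (vert \<Rightarrow> int) \<Rightarrow> int" where
  "degree m n u = (\<Sum>c\<in>V m n. u c)"

definition Delta :: "nat \<Rightarrow> nat \<Rightarrow> vert \<Rightarrow> (vert \<Rightarrow> int)" where
  "Delta m n c = (\<lambda>x. (if x = c then gdeg m n c else 0) - (if adj m n c x then 1 else 0))"

definition DeltaSet :: "nat \<Rightarrow> nat \<Rightarrow> vert set \<Rightarrow> (vert \<Rightarrow> int)" where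
  "DeltaSet m n C = (\<lambda>x. \<Sum>c\<in>C. Delta m n c x)"

definition toppling_equiv :: "nat \<Rightarrow> nat \<Rightarrow> (vert \<Rightarrow> int) \<Rightarrow> (vert \<Rightarrow> int) \<Rightarrow> bool" where
  "toppling_equiv m n u v \<longleftrightarrow>
     (\<exists>t :: vert \<Rightarrow> int. \<forall>x. u x - v x = (\<Sum>c\<in>V m n. t c * Delta m n c x))"

definition effective :: "nat \<Rightarrow> nat \<Rightarrow> (vert \<Rightarrow> int) \<Rightarrow> bool" where
  "effective m n u \<longleftrightarrow>
     (\<exists>v. config m n v \<and> (\<forall>c. v c \<ge> 0) \<and> toppling_equiv m n u v)"

definition rank :: "nat \<Rightarrow> nat \<Rightarrow> (vert \<Rightarrow> int) \<Rightarrow> int" where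
  "rank m n u = -1 + int (LEAST k. \<exists>f. config m n f \<and> (\<forall>c. f c \<ge> 0) \<and>
                          degree m n f = int k \<and> \<not> effective m n (\<lambda>x. u x - f x))"

definition parking :: "nat \<Rightarrow> nat \<Rightarrow> (vert \<Rightarrow> int) \<Rightarrow> bool" where
  "parking m n u \<longleftrightarrow>
     (\<forall>c\<in>V m n - {sink m}. u c \<ge> 0) \<and>
     (\<forall>C. C \<noteq> {} \<longrightarrow> C \<subseteq> V m n - {sink m} \<longrightarrow>
        (\<exists>c\<in>V m n - {sink m}. u c - DeltaSet m n C c < 0))"

definition sorted_conf :: "nat \<Rightarrow> nat \<Rightarrow> (vert \<Rightarrow> int) \<Rightarrow> bool" where
  "sorted_conf m n u \<longleftrightarrow>
     (\<forall>i j. 1 \<le> i \<longrightarrow> i \<le> j \<longrightarrow> j \<le> m - 1 \<longrightarrow> u (A i) \<le> u (A j)) \<and>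
     (\<forall>i j. 1 \<le> i \<longrightarrow> i \<le> j \<longrightarrow> j \<le> n \<longrightarrow> u (B i) \<le> u (B j))"

definition xpara :: "nat \<Rightarrow> nat \<Rightarrow> (vert \<Rightarrow> int) \<Rightarrow> int" where
  "xpara m n u = (int m - 1) * (int n - 1) + rank m n u - degree m n u"

definition ypara :: "nat \<Rightarrow> nat \<Rightarrow> (vert \<Rightarrow> int) \<Rightarrow> int" where
  "ypara m n u = rank m n u + 1"

text \<open>Parking sorted configurations contributing x^a y^b to K_{m,n}(x,y);
  the coefficient of x^a y^b in K_{m,n}(x,y) is the cardinality of this set.\<close>
definition PS :: "nat \<Rightarrow> nat \<Rightarrow> int \<Rightarrow> int \<Rightarrow> (vert \<Rightarrow> int) set" where
  "PS m n a b = {u. config m n u \<and> parking m n u \<and> sorted_conf m n u \<and>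
                    xpara m n u = a \<and> ypara m n u = b}"

definition Kcoeff :: "nat \<Rightarrow> nat \<Rightarrow> int \<Rightarrow> int \<Rightarrow> nat" where
  "Kcoeff m n a b = card (PS m n a b)"

end

theory Submission
  imports Defs "HOL-Combinatorics.Permutations"
begin


definition nb :: "nat \<Rightarrow> nat \<Rightarrow> vert \<Rightarrow> vert set" where
  "nb m n x = {y \<in> V m n. adj m n x y}"

definition lap :: "nat \<Rightarrow> nat \<Rightarrow> (vert \<Rightarrow> int) \<Rightarrow> vert \<Rightarrow> int" where
  "lap m n t x = (\<Sum>c\<in>V m n. t c * Delta m n c x)"

lemma adj_sym: "adj m n x y = adj m n y x"
  by (cases x; cases y) auto

lemma adj_irrefl: "\<not> adj m n x x"
  by (cases x) auto

lemma adj_V: "adj m n x y \<Longrightarrow> x \<in> V m n \<and> y \<in> V m n"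
  by (cases x; cases y) (auto simp: V_def)

lemma finite_V[simp]: "finite (V m n)" by (simp add: V_def)

lemma finite_nb[simp]: "finite (nb m n x)" by (simp add: nb_def)

lemma nb_sub: "nb m n x \<subseteq> V m n" by (auto simp: nb_def)

lemma nb_A: assumes "1 \<le> i" "i \<le> m" shows "nb m n (A i) = B ` {1..n}"
proof
  show "nb m n (A i) \<subseteq> B ` {1..n}"
  proof
    fix y assume "y \<in> nb m n (A i)" then show "y \<in> B ` {1..n}" by (cases y) (auto simp: nb_def)
  qed
  show "B ` {1..n} \<subseteq> nb m n (A i)" using assms by (auto simp: nb_def V_def)
qed

lemma nb_B: assumes "1 \<le> j" "j \<le> n" shows "nb m n (B j) = A ` {1..m}"
proof
  show "nb m n (B j) \<subseteq> A ` {1..m}"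
  proof
    fix y assume "y \<in> nb m n (B j)" then show "y \<in> A ` {1..m}" by (cases y) (auto simp: nb_def)
  qed
  show "A ` {1..m} \<subseteq> nb m n (B j)" using assms by (auto simp: nb_def V_def)
qed

lemma card_nb: assumes "x \<in> V m n" shows "int (card (nb m n x)) = gdeg m n x"
proof -
  have "inj A" "inj B" by (auto simp: inj_def)
  then show ?thesis using assms
    by (auto simp: V_def nb_A nb_B card_image inj_on_def)
qed

lemma sum_V: "sum f (V m n) = (\<Sum>i=1..m. f (A i)) + (\<Sum>j=1..n. f (B j))"
proof -
  have "inj A" "inj B" by (auto simp: inj_def)
  have "sum f (V m n) = sum f (A ` {1..m}) + sum f (B ` {1..n})"
    unfolding V_def by (rule sum.union_disjoint) auto
  also have "\<dots> = (\<Sum>i=1..m. f (A i)) + (\<Sum>j=1..n. f (B j))"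
    using \<open>inj A\<close> \<open>inj B\<close> by (simp add: sum.reindex inj_on_def)
  finally show ?thesis .
qed

lemma lap_eq: assumes "x \<in> V m n" shows "lap m n t x = (\<Sum>y\<in>nb m n x. t x - t y)"
proof -
  have "lap m n t x = (\<Sum>c\<in>V m n. (if c = x then t x * gdeg m n x else 0) - (if c \<in> nb m n x then t c else 0))"
    unfolding lap_def Delta_def
    by (rule sum.cong) (auto simp: nb_def adj_sym adj_irrefl)
  also have "\<dots> = t x * gdeg m n x - sum t (nb m n x)"
    using assms nb_sub[of m n x] by (simp add: sum_subtractf sum.If_cases Int_absorb1)
  also have "\<dots> = (\<Sum>y\<in>nb m n x. t x - t y)"
    using card_nb[OF assms] by (simp add: sum_subtractf mult.commute)
  finally show ?thesis .
qed

lemma lap_out: assumes "x \<notin> V m n" shows "lap m n t x = 0"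
  unfolding lap_def Delta_def using assms adj_V by (auto intro!: sum.neutral)

lemma sum_Delta: assumes "c \<in> V m n" shows "(\<Sum>x\<in>V m n. Delta m n c x) = 0"
proof -
  have "(\<Sum>x\<in>V m n. Delta m n c x) = (\<Sum>x\<in>V m n. (if x = c then gdeg m n c else 0) - (if x \<in> nb m n c then 1 else 0))"
    unfolding Delta_def by (rule sum.cong) (auto simp: nb_def)
  also have "\<dots> = gdeg m n c - int (card (nb m n c))"
    using assms nb_sub[of m n c] by (simp add: sum_subtractf sum.If_cases Int_absorb1)
  finally show ?thesis using card_nb[OF assms] by simp
qed

lemma degree_lap: "(\<Sum>x\<in>V m n. lap m n t x) = 0"
proof -
  have "(\<Sum>x\<in>V m n. lap m n t x) = (\<Sum>x\<in>V m n. \<Sum>c\<in>V m n. t c * Delta m n c x)"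
    by (simp add: lap_def)
  also have "\<dots> = (\<Sum>c\<in>V m n. \<Sum>x\<in>V m n. t c * Delta m n c x)" by (rule sum.swap)
  also have "\<dots> = (\<Sum>c\<in>V m n. t c * (\<Sum>x\<in>V m n. Delta m n c x))"
    by (simp add: sum_distrib_left)
  also have "\<dots> = 0" by (simp add: sum_Delta)
  finally show ?thesis .
qed

lemma lap_add: "lap m n (\<lambda>c. s c + t c) x = lap m n s x + lap m n t x"
  unfolding lap_def by (simp add: algebra_simps sum.distrib)

lemma lap_neg: "lap m n (\<lambda>c. - t c) x = - lap m n t x"
  unfolding lap_def by (simp add: sum_negf)

lemma te_iff: "toppling_equiv m n u v \<longleftrightarrow> (\<exists>t. \<forall>x. u x - v x = lap m n t x)"
  by (simp add: toppling_equiv_def lap_def)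

lemma te_refl: "toppling_equiv m n u u"
  unfolding te_iff by (rule exI[of _ "\<lambda>_. 0"]) (simp add: lap_def)

lemma te_sym: "toppling_equiv m n u v \<Longrightarrow> toppling_equiv m n v u"
  unfolding te_iff
proof (elim exE)
  fix t assume "\<forall>x. u x - v x = lap m n t x"
  then have "\<forall>x. v x - u x = lap m n (\<lambda>c. - t c) x" by (metis lap_neg minus_diff_eq)
  then show "\<exists>t. \<forall>x. v x - u x = lap m n t x" by blast
qed

lemma te_trans: "toppling_equiv m n u v \<Longrightarrow> toppling_equiv m n v w \<Longrightarrow> toppling_equiv m n u w"
  unfolding te_iff
proof (elim exE)
  fix s t assume "\<forall>x. u x - v x = lap m n s x" "\<forall>x. v x - w x = lap m n t x"
  then have "\<forall>x. u x - w x = lap m n (\<lambda>c. s c + t c) x"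
  proof (intro allI)
    fix x assume h: "\<forall>x. u x - v x = lap m n s x" "\<forall>x. v x - w x = lap m n t x"
    have "u x - w x = (u x - v x) + (v x - w x)" by simp
    then show "u x - w x = lap m n (\<lambda>c. s c + t c) x" using h by (simp add: lap_add)
  qed
  then show "\<exists>t. \<forall>x. u x - w x = lap m n t x" by blast
qed

lemma te_degree: "toppling_equiv m n u v \<Longrightarrow> degree m n u = degree m n v"
proof -
  assume "toppling_equiv m n u v"
  then obtain t where t: "\<And>x. u x - v x = lap m n t x" unfolding te_iff by blast
  have "degree m n u - degree m n v = (\<Sum>x\<in>V m n. u x - v x)"
    unfolding degree_def by (rule sum_subtractf[symmetric])
  also have "\<dots> = (\<Sum>x\<in>V m n. lap m n t x)"
    by (rule sum.cong) (auto simp only: t)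
  also have "\<dots> = 0" by (rule degree_lap)
  finally show ?thesis by simp
qed


definition nu :: "nat \<Rightarrow> nat \<Rightarrow> (vert \<Rightarrow> int) \<Rightarrow> vert \<Rightarrow> int" where
  "nu m n p x = (if x \<in> V m n then int (card {y \<in> nb m n x. p y < p x}) - 1 else 0)"

definition Kc :: "nat \<Rightarrow> nat \<Rightarrow> vert \<Rightarrow> int" where
  "Kc m n x = (if x \<in> V m n then gdeg m n x - 2 else 0)"

lemma V_ne: "1 \<le> m \<Longrightarrow> V m n \<noteq> {}"
  by (auto simp: V_def)

lemma eff_te: "effective m n u \<Longrightarrow> toppling_equiv m n u u' \<Longrightarrow> effective m n u'"
  unfolding effective_def by (meson te_sym te_trans)

lemma eff_add:
  assumes "effective m n u" "config m n G" "\<forall>c. G c \<ge> 0"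
  shows "effective m n (\<lambda>x. u x + G x)"
proof -
  obtain v where v: "config m n v" "\<forall>c. v c \<ge> 0" "toppling_equiv m n u v"
    using assms(1) unfolding effective_def by blast
  have "config m n (\<lambda>x. v x + G x)" using v(1) assms(2) by (simp add: config_def)
  moreover have "\<forall>c. v c + G c \<ge> 0" using v(2) assms(3) by (simp add: add_nonneg_nonneg)
  moreover have "toppling_equiv m n (\<lambda>x. u x + G x) (\<lambda>x. v x + G x)"
    using v(3) unfolding toppling_equiv_def by simp
  ultimately show ?thesis unfolding effective_def by blast
qed

lemma te_sub: "toppling_equiv m n u u' \<Longrightarrow> toppling_equiv m n (\<lambda>x. u x - f x) (\<lambda>x. u' x - f x)"
  unfolding toppling_equiv_def by simp

lemma rank_te: assumes "toppling_equiv m n u u'" shows "rank m n u = rank m n u'"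
proof -
  have e: "effective m n (\<lambda>x. u x - f x) = effective m n (\<lambda>x. u' x - f x)" for f
  proof -
    have e1: "toppling_equiv m n (\<lambda>x. u x - f x) (\<lambda>x. u' x - f x)" by (rule te_sub[OF assms])
    show ?thesis
    proof
      assume "effective m n (\<lambda>x. u x - f x)"
      then show "effective m n (\<lambda>x. u' x - f x)" by (rule eff_te[OF _ e1])
    next
      assume "effective m n (\<lambda>x. u' x - f x)"
      then show "effective m n (\<lambda>x. u x - f x)" by (rule eff_te[OF _ te_sym[OF e1]])
    qed
  qed
  show ?thesis unfolding rank_def by (simp only: e)
qed

lemma nu_not_eff:
  assumes "1 \<le> m" "inj_on p (V m n)"
  shows "\<not> effective m n (nu m n p)"
proof
  assume "effective m n (nu m n p)"
  then obtain v t where v: "config m n v" "\<forall>c. v c \<ge> 0" "\<And>x. nu m n p x - v x = lap m n t x"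
    unfolding effective_def te_iff by blast
  define M where "M = Max (t ` V m n)"
  define Am where "Am = {c \<in> V m n. t c = M}"
  have tM: "\<And>c. c \<in> V m n \<Longrightarrow> t c \<le> M" unfolding M_def by simp
  have "M \<in> t ` V m n" unfolding M_def using V_ne[OF assms(1)] by simp
  then have "Am \<noteq> {}" unfolding Am_def by auto
  have fA: "finite Am" unfolding Am_def by simp
  define mu where "mu = Min (p ` Am)"
  have "mu \<in> p ` Am" unfolding mu_def using fA \<open>Am \<noteq> {}\<close> by simp
  then obtain v0 where v0: "v0 \<in> Am" "p v0 = mu" by blast
  have v0min: "\<And>y. y \<in> Am \<Longrightarrow> p v0 \<le> p y" unfolding v0(2) mu_def using fA by simp
  have v0V: "v0 \<in> V m n" and tv0: "t v0 = M" using v0 unfolding Am_def by auto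
  have "lap m n t v0 = (\<Sum>y\<in>nb m n v0. t v0 - t y)" by (rule lap_eq[OF v0V])
  also have "\<dots> \<ge> (\<Sum>y\<in>nb m n v0. if y \<in> Am then 0 else 1)"
  proof (rule sum_mono)
    fix y assume y: "y \<in> nb m n v0"
    then have "y \<in> V m n" using nb_sub by blast
    then show "(if y \<in> Am then 0 else 1) \<le> t v0 - t y"
      using tM[of y] tv0 unfolding Am_def by auto
  qed
  moreover have "{y \<in> nb m n v0. y \<notin> Am} = nb m n v0 \<inter> - Am" by auto
  ultimately have "lap m n t v0 \<ge> int (card {y \<in> nb m n v0. y \<notin> Am})"
    by (simp add: sum.If_cases)
  moreover have "card {y \<in> nb m n v0. p y < p v0} \<le> card {y \<in> nb m n v0. y \<notin> Am}"
    by (rule card_mono) (auto dest: v0min)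
  ultimately have "lap m n t v0 \<ge> nu m n p v0 + 1" unfolding nu_def using v0V by simp
  then have "v v0 < 0" using v(3)[of v0] by simp
  then show False using v(2) by (meson not_less)
qed



lemma sink_V: "1 \<le> m \<Longrightarrow> sink m \<in> V m n"
  by (auto simp: sink_def V_def)

lemma sum_ind: assumes "finite S" shows "(\<Sum>x\<in>S. if P x then (1::int) else 0) = int (card {x \<in> S. P x})"
proof -
  have "(\<Sum>x\<in>S. if P x then (1::int) else 0) = (\<Sum>x\<in>{x \<in> S. P x}. 1)"
    using sum.inter_filter[OF assms, of "\<lambda>_. (1::int)" P] by simp
  then show ?thesis by simp
qed

lemma DeltaSet_in:
  assumes "C \<subseteq> V m n" "x \<in> C"
  shows "DeltaSet m n C x = int (card {y \<in> nb m n x. y \<notin> C})"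
proof -
  have fC: "finite C" using finite_subset[OF assms(1) finite_V] .
  have xV: "x \<in> V m n" using assms by blast
  have "DeltaSet m n C x = (\<Sum>c\<in>C. (if x = c then gdeg m n x else 0) - (if c \<in> nb m n x then 1 else 0))"
    unfolding DeltaSet_def Delta_def
  proof (rule sum.cong)
    fix c assume "c \<in> C"
    then have "c \<in> V m n" using assms(1) by blast
    then show "(if x = c then gdeg m n c else 0) - (if adj m n c x then 1 else 0)
       = (if x = c then gdeg m n x else 0) - (if c \<in> nb m n x then 1 else 0)"
      by (auto simp: nb_def adj_sym)
  qed simp
  also have "\<dots> = (\<Sum>c\<in>C. if x = c then gdeg m n x else 0) - (\<Sum>c\<in>C. if c \<in> nb m n x then 1 else 0)"
    by (rule sum_subtractf)
  also have "\<dots> = gdeg m n x - int (card {c \<in> C. c \<in> nb m n x})"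
    using fC assms(2) by (simp only: sum.delta' sum_ind) simp
  also have "\<dots> = int (card {y \<in> nb m n x. y \<notin> C})"
  proof -
    have e1: "{c \<in> C. c \<in> nb m n x} = nb m n x \<inter> C" by blast
    have e2: "gdeg m n x = int (card (nb m n x))" using card_nb[OF xV] by simp
    have e3: "nb m n x - C = {y \<in> nb m n x. y \<notin> C}" by blast
    have d: "(nb m n x - C) \<inter> (nb m n x \<inter> C) = {}" by blast
    have u: "(nb m n x - C) \<union> (nb m n x \<inter> C) = nb m n x" by blast
    have "card ((nb m n x - C) \<union> (nb m n x \<inter> C)) = card (nb m n x - C) + card (nb m n x \<inter> C)"
      by (rule card_Un_disjoint) (simp_all add: d)
    then have "card (nb m n x) = card (nb m n x - C) + card (nb m n x \<inter> C)" unfolding u .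
    then show ?thesis unfolding e1 e2 e3[symmetric] by simp
  qed
  finally show ?thesis .
qed

lemma DeltaSet_out:
  assumes "C \<subseteq> V m n" "x \<notin> C"
  shows "DeltaSet m n C x = - int (card {c \<in> C. adj m n c x})"
proof -
  have fC: "finite C" using finite_subset[OF assms(1) finite_V] .
  have "DeltaSet m n C x = (\<Sum>c\<in>C. - (if adj m n c x then 1 else 0))"
    unfolding DeltaSet_def Delta_def
  proof (rule sum.cong)
    fix c assume "c \<in> C" then show "(if x = c then gdeg m n c else 0) - (if adj m n c x then 1 else 0) = - (if adj m n c x then 1 else 0)"
      using assms(2) by auto
  qed simp
  also have "\<dots> = - (\<Sum>c\<in>C. if adj m n c x then 1 else 0)" by (rule sum_negf)
  also have "\<dots> = - int (card {c \<in> C. adj m n c x})" using fC by (simp only: sum_ind)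
  finally show ?thesis .
qed

lemma DeltaSet_out_le: "C \<subseteq> V m n \<Longrightarrow> x \<notin> C \<Longrightarrow> DeltaSet m n C x \<le> 0"
  by (simp add: DeltaSet_out)

lemma DeltaSet_lap: assumes "C \<subseteq> V m n" shows "DeltaSet m n C x = lap m n (\<lambda>c. if c \<in> C then 1 else 0) x"
proof -
  have "lap m n (\<lambda>c. if c \<in> C then 1 else 0) x = (\<Sum>c\<in>V m n. if c \<in> C then Delta m n c x else 0)"
    unfolding lap_def by (rule sum.cong) auto
  also have "\<dots> = sum (\<lambda>c. Delta m n c x) (V m n \<inter> C)" by (simp add: sum.inter_restrict)
  also have "V m n \<inter> C = C" using assms by blast
  finally show ?thesis unfolding DeltaSet_def by simp
qed

lemma park_bound:
  assumes "parking m n u" "c \<in> V m n - {sink m}"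
  shows "0 \<le> u c \<and> u c < gdeg m n c"
proof -
  have C: "{c} \<subseteq> V m n - {sink m}" using assms(2) by blast
  obtain x where x: "x \<in> V m n - {sink m}" "u x - DeltaSet m n {c} x < 0"
    using assms(1) C unfolding parking_def by blast
  have "x = c"
  proof (rule ccontr)
    assume "x \<noteq> c"
    then have "DeltaSet m n {c} x \<le> 0" using assms(2) by (intro DeltaSet_out_le) auto
    moreover have "u x \<ge> 0" using assms(1) x(1) unfolding parking_def by blast
    ultimately show False using x(2) by simp
  qed
  then have "u c < DeltaSet m n {c} c" using x by simp
  also have "\<dots> = int (card {y \<in> nb m n c. y \<noteq> c})"
    using assms(2) DeltaSet_in[of "{c}" m n c] by simp
  also have "\<dots> \<le> int (card (nb m n c))" by (simp add: card_mono)
  also have "\<dots> = gdeg m n c" using card_nb assms(2) by blast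
  finally show ?thesis using assms unfolding parking_def by auto
qed

lemma park_max:
  assumes m: "1 \<le> m" and pu: "parking m n u" and pv: "parking m n v" and cv: "config m n v"
    and t: "\<And>x. u x - v x = lap m n t x" and cV: "c \<in> V m n"
  shows "t c \<le> t (sink m)"
proof (rule ccontr)
  assume "\<not> t c \<le> t (sink m)"
  define M where "M = Max (t ` V m n)"
  define C where "C = {c \<in> V m n. t c = M}"
  have tM: "\<And>c. c \<in> V m n \<Longrightarrow> t c \<le> M" unfolding M_def by simp
  have "M \<in> t ` V m n" unfolding M_def using V_ne[OF m] by simp
  then have "C \<noteq> {}" unfolding C_def by auto
  have "sink m \<notin> C" using tM[OF cV] \<open>\<not> t c \<le> t (sink m)\<close> unfolding C_def by auto
  then have CV: "C \<subseteq> V m n - {sink m}" unfolding C_def by auto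
  obtain x where x: "x \<in> V m n - {sink m}" "u x - DeltaSet m n C x < 0"
    using pu CV \<open>C \<noteq> {}\<close> unfolding parking_def by blast
  have ux: "u x \<ge> 0" "v x \<ge> 0" using pu pv x(1) unfolding parking_def by auto
  show False
  proof (cases "x \<in> C")
    case False
    then show False using DeltaSet_out_le[of C m n x] CV ux x(2) by auto
  next
    case True
    have xV: "x \<in> V m n" using x by blast
    have tx: "t x = M" using True unfolding C_def by blast
    have "lap m n t x = (\<Sum>y\<in>nb m n x. t x - t y)" by (rule lap_eq[OF xV])
    also have "\<dots> \<ge> (\<Sum>y\<in>nb m n x. if y \<in> C then 0 else 1)"
    proof (rule sum_mono)
      fix y assume y: "y \<in> nb m n x"
      then have "y \<in> V m n" using nb_sub by blast
      then show "(if y \<in> C then 0 else 1) \<le> t x - t y"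
        using tM[of y] tx unfolding C_def by auto
    qed
    moreover have "{y \<in> nb m n x. y \<notin> C} = nb m n x \<inter> - C" by auto
    ultimately have "lap m n t x \<ge> int (card {y \<in> nb m n x. y \<notin> C})"
      by (simp add: sum.If_cases)
    have CV': "C \<subseteq> V m n" using CV by blast
    have "lap m n t x \<ge> DeltaSet m n C x" using DeltaSet_in[OF CV' True] \<open>lap m n t x \<ge> _\<close> by simp
    then show False using t[of x] ux x(2) by linarith
  qed
qed

lemma park_unique:
  assumes m: "1 \<le> m" and "parking m n u" "parking m n v" "config m n u" "config m n v"
    and "toppling_equiv m n u v"
  shows "u = v"
proof
  fix x
  obtain t where t: "\<And>x. u x - v x = lap m n t x" using assms(6) unfolding te_iff by blast
  have t': "\<And>x. v x - u x = lap m n (\<lambda>c. - t c) x" using t by (metis lap_neg minus_diff_eq)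
  have const: "\<And>c. c \<in> V m n \<Longrightarrow> t c = t (sink m)"
  proof -
    fix c assume c: "c \<in> V m n"
    show "t c = t (sink m)"
      using park_max[OF m assms(2) assms(3) assms(5) t c] park_max[OF m assms(3) assms(2) assms(4) t' c]
      by simp
  qed
  show "u x = v x"
  proof (cases "x \<in> V m n")
    case True
    have "lap m n t x = (\<Sum>y\<in>nb m n x. t x - t y)" by (rule lap_eq[OF True])
    also have "\<dots> = 0"
    proof (intro sum.neutral ballI)
      fix y assume "y \<in> nb m n x"
      then have "y \<in> V m n" using nb_sub by blast
      then show "t x - t y = 0" using const True by simp
    qed
    finally show ?thesis using t[of x] by simp
  next
    case False
    then show ?thesis using assms(4,5) unfolding config_def by simp
  qed
qed



lemma ex_max_int:
  fixes f :: "'a \<Rightarrow> int"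
  assumes "x0 \<in> S" "\<And>x. x \<in> S \<Longrightarrow> f x \<le> b"
  shows "\<exists>x\<in>S. \<forall>y\<in>S. f y \<le> f x"
proof -
  define k where "k = (LEAST k. \<exists>x\<in>S. nat (b - f x) = k)"
  have "\<exists>x\<in>S. nat (b - f x) = k" unfolding k_def
    by (rule LeastI[of _ "nat (b - f x0)"]) (use assms(1) in blast)
  then obtain x where x: "x \<in> S" "nat (b - f x) = k" by blast
  have "f y \<le> f x" if "y \<in> S" for y
  proof -
    have "k \<le> nat (b - f y)" unfolding k_def by (rule Least_le) (use that in blast)
    then show ?thesis using x(2) assms(2)[OF that] assms(2)[OF x(1)] by simp
  qed
  then show ?thesis using x(1) by blast
qed

lemma V_cases:
  assumes "c \<in> V m n"
  obtains i where "c = A i" "1 \<le> i" "i \<le> m" | j where "c = B j" "1 \<le> j" "j \<le> n"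
  using assms unfolding V_def by auto

lemma nonneg_rep:
  assumes m: "1 \<le> m" and n: "1 \<le> n" and cu: "config m n u"
  shows "\<exists>w. config m n w \<and> toppling_equiv m n u w \<and> (\<forall>c\<in>V m n - {sink m}. w c \<ge> 0)"
proof -
  define k where "k = (\<Sum>c\<in>V m n. \<bar>u c\<bar>)"
  have k0: "k \<ge> 0" unfolding k_def by (simp add: sum_nonneg)
  have uk: "\<bar>u c\<bar> \<le> k" if "c \<in> V m n" for c
    unfolding k_def by (rule member_le_sum) (use that in auto)
  define t1 where "t1 = (\<lambda>c. case c of A i \<Rightarrow> (if i = m then int (m+1) * k else 0) | B j \<Rightarrow> k)"
  define w where "w = (\<lambda>x. u x - lap m n t1 x)"
  have cw: "config m n w" using cu lap_out unfolding w_def config_def by simp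
  have te: "toppling_equiv m n u w" unfolding te_iff w_def by auto
  have "w c \<ge> 0" if c: "c \<in> V m n - {sink m}" for c
  proof -
    have cV: "c \<in> V m n" using c by blast
    have "lap m n t1 c \<le> - k"
    proof (cases rule: V_cases[OF cV])
      case (1 i)
      have "i \<noteq> m" using c 1 by (auto simp: sink_def)
      have "lap m n t1 c = (\<Sum>y\<in>nb m n c. t1 c - t1 y)" by (rule lap_eq[OF cV])
      also have "\<dots> = (\<Sum>y\<in>nb m n c. - k)"
        by (rule sum.cong) (use 1 \<open>i \<noteq> m\<close> in \<open>auto simp: nb_A t1_def\<close>)
      also have "\<dots> = - (int n * k)" using card_nb[OF cV] 1 by simp
      finally show ?thesis using n k0 by (simp add: mult_le_cancel_right1)
    next
      case (2 j)
      have "inj A" by (auto simp: inj_def)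
      have "lap m n t1 c = (\<Sum>y\<in>nb m n c. t1 c - t1 y)" by (rule lap_eq[OF cV])
      also have "\<dots> = (\<Sum>y\<in>A ` {1..m}. k - t1 y)" using 2 by (simp add: nb_B t1_def)
      also have "\<dots> = (\<Sum>i=1..m. k - t1 (A i))"
        using \<open>inj A\<close> by (simp add: sum.reindex inj_on_def)
      also have "\<dots> = (\<Sum>i=1..m. k) - (\<Sum>i=1..m. t1 (A i))" by (rule sum_subtractf)
      also have "(\<Sum>i=1..m. t1 (A i)) = (\<Sum>i=1..m. if i = m then int (m+1) * k else 0)"
        by (simp add: t1_def)
      also have "\<dots> = int (m+1) * k" using m by simp
      finally show ?thesis by (simp add: algebra_simps)
    qed
    then show ?thesis unfolding w_def using uk[OF cV] by linarith
  qed
  then show ?thesis using cw te by blast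
qed

lemma degree_split:
  assumes "1 \<le> m"
  shows "degree m n w = w (sink m) + (\<Sum>c\<in>V m n - {sink m}. w c)"
  unfolding degree_def using sink_V[OF assms] by (simp add: sum.remove)

lemma DeltaSet_outV: "C \<subseteq> V m n \<Longrightarrow> x \<notin> V m n \<Longrightarrow> DeltaSet m n C x = 0"
proof -
  assume a: "C \<subseteq> V m n" "x \<notin> V m n"
  then have "x \<notin> C" by blast
  then have "DeltaSet m n C x = - int (card {c \<in> C. adj m n c x})" using DeltaSet_out[OF a(1)] by blast
  also have "{c \<in> C. adj m n c x} = {}" using a(2) adj_V by blast
  finally show ?thesis by simp
qed

lemma park_exists:
  assumes m: "1 \<le> m" and n: "1 \<le> n" and cu: "config m n u"
  shows "\<exists>w. config m n w \<and> parking m n w \<and> toppling_equiv m n u w"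
proof -
  define S where "S = {w. config m n w \<and> toppling_equiv m n u w \<and> (\<forall>c\<in>V m n - {sink m}. w c \<ge> 0)}"
  obtain w0 where w0: "w0 \<in> S" using nonneg_rep[OF m n cu] unfolding S_def by blast
  have Sdeg: "w (sink m) + (\<Sum>c\<in>V m n - {sink m}. w c) = degree m n u" if "w \<in> S" for w
    using that te_degree[of m n u w] degree_split[OF m, of n w] unfolding S_def by simp
  have Snn: "(\<Sum>c\<in>V m n - {sink m}. w c) \<ge> 0" if "w \<in> S" for w
    using that unfolding S_def by (intro sum_nonneg) blast
  have "\<exists>w\<in>S. \<forall>y\<in>S. y (sink m) \<le> w (sink m)"
    by (rule ex_max_int[OF w0, of _ "degree m n u"]) (use Sdeg Snn in fastforce)
  then obtain w1 where w1: "w1 \<in> S" "\<And>y. y \<in> S \<Longrightarrow> y (sink m) \<le> w1 (sink m)" by blast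
  define S2 where "S2 = {w \<in> S. w (sink m) = w1 (sink m)}"
  define BS where "BS = (\<lambda>w::vert \<Rightarrow> int. sum w (B ` {1..n}))"
  have Bsub: "B ` {1..n} \<subseteq> V m n - {sink m}" by (auto simp: V_def sink_def)
  have BSle: "BS w \<le> (\<Sum>c\<in>V m n - {sink m}. w c)" if "w \<in> S" for w
    unfolding BS_def by (rule sum_mono2) (use that Bsub in \<open>auto simp: S_def\<close>)
  have "w1 \<in> S2" using w1 unfolding S2_def by simp
  have "\<exists>w\<in>S2. \<forall>y\<in>S2. BS y \<le> BS w"
  proof (rule ex_max_int[OF \<open>w1 \<in> S2\<close>, of _ "degree m n u - w1 (sink m)"])
    fix x assume "x \<in> S2"
    then show "BS x \<le> degree m n u - w1 (sink m)" using BSle Sdeg unfolding S2_def by fastforce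
  qed
  then obtain w2 where w2: "w2 \<in> S2" "\<And>y. y \<in> S2 \<Longrightarrow> BS y \<le> BS w2" by blast
  have w2S: "w2 \<in> S" and w2s: "w2 (sink m) = w1 (sink m)" using w2(1) unfolding S2_def by auto
  have "parking m n w2"
    unfolding parking_def
  proof (intro conjI allI impI)
    show "\<forall>c\<in>V m n - {sink m}. 0 \<le> w2 c" using w2S unfolding S_def by blast
    fix C assume Cne: "C \<noteq> {}" and CV: "C \<subseteq> V m n - {sink m}"
    show "\<exists>c\<in>V m n - {sink m}. w2 c - DeltaSet m n C c < 0"
    proof (rule ccontr)
      assume "\<not> ?thesis"
      then have nn: "\<forall>c\<in>V m n - {sink m}. w2 c - DeltaSet m n C c \<ge> 0" by (meson not_le)
      have CV': "C \<subseteq> V m n" using CV by blast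
      define w3 where "w3 = (\<lambda>x. w2 x - DeltaSet m n C x)"
      have "config m n w3" using w2S DeltaSet_outV[OF CV'] unfolding w3_def S_def config_def by simp
      moreover have "toppling_equiv m n u w3"
      proof -
        have "toppling_equiv m n w2 w3" unfolding te_iff w3_def
          using DeltaSet_lap[OF CV'] by auto
        then show ?thesis using w2S te_trans unfolding S_def by blast
      qed
      ultimately have w3S: "w3 \<in> S" using nn unfolding S_def w3_def by blast
      have sC: "sink m \<notin> C" using CV by blast
      have w3s: "w3 (sink m) = w2 (sink m) + int (card {c \<in> C. adj m n c (sink m)})"
        unfolding w3_def using DeltaSet_out[OF CV' sC] by simp
      have fC: "finite C" using finite_subset[OF CV' finite_V] .
      show False
      proof (cases "\<exists>j. B j \<in> C")
        case True
        then obtain j where j: "B j \<in> C" by blast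
        then have "1 \<le> j" "j \<le> n" using CV' unfolding V_def by auto
        then have "B j \<in> {c \<in> C. adj m n c (sink m)}" using j m by (simp add: sink_def)
        then have "card {c \<in> C. adj m n c (sink m)} > 0" using fC by (auto simp: card_gt_0_iff)
        then have "w3 (sink m) > w1 (sink m)" using w3s w2s by simp
        then show False using w1(2)[OF w3S] by simp
      next
        case False
        have "{c \<in> C. adj m n c (sink m)} = {}"
        proof -
          have "\<not> adj m n c (sink m)" if "c \<in> C" for c
            using False that by (cases c) (auto simp: sink_def)
          then show ?thesis by blast
        qed
        then have "card {c \<in> C. adj m n c (sink m)} = 0" by (simp only: card.empty)
        then have "w3 \<in> S2" using w3S w3s w2s unfolding S2_def by simp
        then have le: "BS w3 \<le> BS w2" by (rule w2(2))
        obtain c0 where c0: "c0 \<in> C" using Cne by blast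
        then obtain i where i: "c0 = A i" "1 \<le> i" "i \<le> m" using False CV'
          by (metis V_cases subsetD)
        have "BS w3 = (\<Sum>y\<in>B ` {1..n}. w2 y - DeltaSet m n C y)" unfolding BS_def w3_def by simp
        also have "\<dots> = BS w2 - (\<Sum>y\<in>B ` {1..n}. DeltaSet m n C y)"
          unfolding BS_def by (rule sum_subtractf)
        finally have eq: "BS w3 = BS w2 - (\<Sum>y\<in>B ` {1..n}. DeltaSet m n C y)" .
        have "(\<Sum>y\<in>B ` {1..n}. DeltaSet m n C y) \<le> (\<Sum>y\<in>B ` {1..n}. -1)"
        proof (rule sum_mono)
          fix y assume y: "y \<in> B ` {1..n}"
          then obtain j where j: "y = B j" "1 \<le> j" "j \<le> n" by auto
          have "y \<notin> C" using False j by blast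
          have "c0 \<in> {c \<in> C. adj m n c y}" using c0 i j by simp
          then have "card {c \<in> C. adj m n c y} > 0" using fC by (auto simp: card_gt_0_iff)
          then show "DeltaSet m n C y \<le> -1" using DeltaSet_out[OF CV' \<open>y \<notin> C\<close>] by simp
        qed
        then have "BS w3 \<ge> BS w2 + int (card (B ` {1..n}))" using eq by simp
        moreover have "card (B ` {1..n}) = n" by (simp add: card_image inj_on_def)
        ultimately show False using le n by simp
      qed
    qed
  qed
  then show ?thesis using w2S unfolding S_def by blast
qed



lemma burn_aux:
  assumes m: "1 \<le> m" and pw: "parking m n w"
  shows "sink m \<in> S \<Longrightarrow> S \<subseteq> V m n \<Longrightarrow> \<exists>p::vert \<Rightarrow> int. inj_on p (V m n - S) \<and> (\<forall>x\<in>V m n - S. p x \<ge> 0) \<and>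
     (\<forall>x\<in>V m n - S. w x < int (card {y \<in> nb m n x. y \<in> S \<or> (y \<notin> S \<and> p y < p x)}))"
proof (induction "card (V m n - S)" arbitrary: S rule: less_induct)
  case (less S)
  show ?case
  proof (cases "V m n - S = {}")
    case True
    show ?thesis by (intro exI[of _ "\<lambda>_. 0::int"]) (simp only: True inj_on_empty ball_empty simp_thms)
  next
    case False
    define C where "C = V m n - S"
    have CV: "C \<subseteq> V m n - {sink m}" using less.prems unfolding C_def by blast
    have CV': "C \<subseteq> V m n" using CV by blast
    have Cne: "C \<noteq> {}" using False unfolding C_def .
    obtain x where x: "x \<in> V m n - {sink m}" "w x - DeltaSet m n C x < 0"
      using pw CV Cne unfolding parking_def by blast
    have wx0: "w x \<ge> 0" using pw x(1) unfolding parking_def by blast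
    have xC: "x \<in> C"
    proof (rule ccontr)
      assume "x \<notin> C"
      then have "DeltaSet m n C x \<le> 0" using DeltaSet_out_le[OF CV'] by blast
      then show False using x(2) wx0 by simp
    qed
    have "DeltaSet m n C x = int (card {y \<in> nb m n x. y \<notin> C})" by (rule DeltaSet_in[OF CV' xC])
    also have "{y \<in> nb m n x. y \<notin> C} = {y \<in> nb m n x. y \<in> S}" using nb_sub[of m n x] unfolding C_def by blast
    finally have wxS: "w x < int (card {y \<in> nb m n x. y \<in> S})" using x(2) by simp
    define S' where "S' = insert x S"
    have "card (V m n - S') < card (V m n - S)"
      unfolding S'_def using xC unfolding C_def by (intro psubset_card_mono) auto
    moreover have "sink m \<in> S'" "S' \<subseteq> V m n" using less.prems xC unfolding S'_def C_def by auto
    ultimately obtain p :: "vert \<Rightarrow> int" where p: "inj_on p (V m n - S')" "\<forall>z\<in>V m n - S'. p z \<ge> 0"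
      "\<forall>z\<in>V m n - S'. w z < int (card {y \<in> nb m n z. y \<in> S' \<or> (y \<notin> S' \<and> p y < p z)})"
      using less.hyps by blast
    define p' where "p' = (\<lambda>z. if z = x then 0 else p z + 1)"
    have "inj_on p' (V m n - S)"
    proof (rule inj_onI)
      fix a b assume ab: "a \<in> V m n - S" "b \<in> V m n - S" "p' a = p' b"
      show "a = b"
      proof (cases "a = x \<or> b = x")
        case True
        have ge: "z \<noteq> x \<Longrightarrow> p' z \<ge> 1" if "z \<in> V m n - S" for z
          using p(2) that unfolding p'_def S'_def by simp
        have px: "p' x = 0" unfolding p'_def by simp
        show ?thesis using ge[OF ab(1)] ge[OF ab(2)] px ab(3) True by fastforce
      next
        case False
        then have "p a = p b" "a \<in> V m n - S'" "b \<in> V m n - S'" using ab unfolding p'_def S'_def by auto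
        then show ?thesis using p(1) by (meson inj_onD)
      qed
    qed
    moreover have "\<forall>z\<in>V m n - S. p' z \<ge> 0" using p(2) unfolding p'_def S'_def by auto
    moreover have "w z < int (card {y \<in> nb m n z. y \<in> S \<or> (y \<notin> S \<and> p' y < p' z)})" if z: "z \<in> V m n - S" for z
    proof (cases "z = x")
      case True
      have "card {y \<in> nb m n x. y \<in> S} \<le> card {y \<in> nb m n z. y \<in> S \<or> (y \<notin> S \<and> p' y < p' z)}"
        using True by (intro card_mono) auto
      then show ?thesis using wxS True by simp
    next
      case False
      then have zS': "z \<in> V m n - S'" using z unfolding S'_def by blast
      have "{y \<in> nb m n z. y \<in> S' \<or> (y \<notin> S' \<and> p y < p z)} = {y \<in> nb m n z. y \<in> S \<or> (y \<notin> S \<and> p' y < p' z)}"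
      proof -
        have "p z \<ge> 0" using p(2) zS' by blast
        then show ?thesis using False xC unfolding S'_def p'_def C_def by auto
      qed
      then show ?thesis using bspec[OF p(3) zS'] by simp
    qed
    ultimately show ?thesis by blast
  qed
qed

lemma burn:
  assumes m: "1 \<le> m" and pw: "parking m n w" and ws: "w (sink m) < 0"
  shows "\<exists>P. inj_on P (V m n) \<and> (\<forall>x\<in>V m n. w x \<le> nu m n P x)"
proof -
  have ex: "\<exists>p::vert \<Rightarrow> int. inj_on p (V m n - {sink m}) \<and> (\<forall>x\<in>V m n - {sink m}. p x \<ge> 0) \<and>
    (\<forall>x\<in>V m n - {sink m}. w x < int (card {y \<in> nb m n x. y \<in> {sink m} \<or> (y \<notin> {sink m} \<and> p y < p x)}))"
    by (rule burn_aux[OF m pw]) (simp_all add: sink_V[OF m])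
  obtain p :: "vert \<Rightarrow> int" where pall: "inj_on p (V m n - {sink m}) \<and> (\<forall>x\<in>V m n - {sink m}. p x \<ge> 0) \<and>
    (\<forall>x\<in>V m n - {sink m}. w x < int (card {y \<in> nb m n x. y \<in> {sink m} \<or> (y \<notin> {sink m} \<and> p y < p x)}))"
    using ex by blast
  note p = conjunct1[OF pall] conjunct1[OF conjunct2[OF pall]] conjunct2[OF conjunct2[OF pall]]
  define P where "P = (\<lambda>z. if z = sink m then -1 else p z)"
  have "inj_on P (V m n)"
  proof (rule inj_onI)
    fix a b assume ab: "a \<in> V m n" "b \<in> V m n" "P a = P b"
    show "a = b"
    proof (cases "a = sink m \<or> b = sink m")
      case True
      have ge: "z \<noteq> sink m \<Longrightarrow> P z \<ge> 0" if "z \<in> V m n" for z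
        using p(2) that unfolding P_def by simp
      have px: "P (sink m) = -1" unfolding P_def by simp
      show ?thesis using ge[OF ab(1)] ge[OF ab(2)] px ab(3) True by fastforce
    next
      case False
      then show ?thesis using ab p(1) unfolding P_def by (auto dest: inj_onD)
    qed
  qed
  moreover have "w x \<le> nu m n P x" if x: "x \<in> V m n" for x
  proof (cases "x = sink m")
    case True
    have "{y \<in> nb m n x. P y < P x} = {}"
    proof -
      have "\<not> P y < P x" if "y \<in> nb m n x" for y
      proof -
        have "y \<in> V m n" using that nb_sub by blast
        then show ?thesis
        proof (cases "y = sink m")
          case False
          then have "p y \<ge> 0" using p(2) \<open>y \<in> V m n\<close> by blast
          then show ?thesis using True False unfolding P_def by simp
        qed (use True in \<open>simp add: P_def\<close>)
      qed
      then show ?thesis by blast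
    qed
    then have "nu m n P x = -1" using x unfolding nu_def by simp
    then show ?thesis using ws True by simp
  next
    case False
    have "{y \<in> nb m n x. P y < P x} = {y \<in> nb m n x. y \<in> {sink m} \<or> (y \<notin> {sink m} \<and> p y < p x)}"
    proof -
      have "p x \<ge> 0" using p(2) x False by blast
      then show ?thesis using False unfolding P_def by auto
    qed
    then show ?thesis using p(3) x False unfolding nu_def by simp
  qed
  ultimately show ?thesis by blast
qed

lemma noneff_nu:
  assumes m: "1 \<le> m" and n: "1 \<le> n" and cD: "config m n D" and ne: "\<not> effective m n D"
  shows "\<exists>p D''. inj_on p (V m n) \<and> config m n D'' \<and> toppling_equiv m n D D'' \<and> (\<forall>x\<in>V m n. D'' x \<le> nu m n p x)"
proof -
  obtain w where w: "config m n w" "parking m n w" "toppling_equiv m n D w"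
    using park_exists[OF m n cD] by blast
  have "w (sink m) < 0"
  proof (rule ccontr)
    assume "\<not> w (sink m) < 0"
    then have "\<forall>c. w c \<ge> 0" using w(1,2) unfolding parking_def config_def by (metis Diff_iff empty_iff insert_iff linorder_not_less order_refl)
    then have "effective m n D" using w unfolding effective_def by blast
    then show False using ne by blast
  qed
  then obtain P where P: "inj_on P (V m n)" "\<forall>x\<in>V m n. w x \<le> nu m n P x" using burn[OF m w(2)] by blast
  show ?thesis
    by (rule exI[of _ P], rule exI[of _ w], intro conjI) (fact P(1), fact w(1), fact w(3), fact P(2))
qed



definition PI :: "nat \<Rightarrow> nat \<Rightarrow> (vert \<Rightarrow> int) \<Rightarrow> ((vert \<Rightarrow> int) \<times> (vert \<Rightarrow> int)) set" where
  "PI m n D = {(D', p). config m n D' \<and> toppling_equiv m n D D' \<and> inj_on p (V m n)}"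

definition hpos :: "nat \<Rightarrow> nat \<Rightarrow> (vert \<Rightarrow> int) \<times> (vert \<Rightarrow> int) \<Rightarrow> nat" where
  "hpos m n i = (\<Sum>x\<in>V m n. nat (fst i x - nu m n (snd i) x))"

definition hneg :: "nat \<Rightarrow> nat \<Rightarrow> (vert \<Rightarrow> int) \<times> (vert \<Rightarrow> int) \<Rightarrow> nat" where
  "hneg m n i = (\<Sum>x\<in>V m n. nat (nu m n (snd i) x - fst i x))"

definition p0 :: "vert \<Rightarrow> int" where
  "p0 x = (case x of A i \<Rightarrow> - int i - 1 | B j \<Rightarrow> int j)"

lemma inj_p0: "inj_on p0 S"
proof (rule inj_onI)
  fix a b assume "p0 a = p0 b"
  then show "a = b" unfolding p0_def by (cases a; cases b) auto
qed

lemma config_nu: "config m n (nu m n p)"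
  unfolding config_def nu_def by simp

lemma config_Kc: "config m n (Kc m n)"
  unfolding config_def Kc_def by simp

lemma H_to_R:
  assumes m: "1 \<le> m" and cD: "config m n D" and i: "i \<in> PI m n D"
  shows "\<exists>f. config m n f \<and> (\<forall>c. f c \<ge> 0) \<and> degree m n f = int (hpos m n i) \<and> \<not> effective m n (\<lambda>x. D x - f x)"
proof -
  obtain D' p where ip: "i = (D', p)" by (cases i)
  have cD': "config m n D'" and te: "toppling_equiv m n D D'" and inj: "inj_on p (V m n)"
    using i unfolding ip PI_def by auto
  define f where "f = (\<lambda>x. if x \<in> V m n then int (nat (D' x - nu m n p x)) else 0)"
  have cf: "config m n f" unfolding f_def config_def by simp
  have f0: "\<forall>c. f c \<ge> 0" unfolding f_def by simp
  have df: "degree m n f = int (hpos m n i)"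
    unfolding degree_def hpos_def ip f_def by (simp add: of_nat_sum)
  have "\<not> effective m n (\<lambda>x. D x - f x)"
  proof
    assume "effective m n (\<lambda>x. D x - f x)"
    then have e1: "effective m n (\<lambda>x. D' x - f x)" using eff_te te_sub[OF te] by blast
    define G where "G = (\<lambda>x. nu m n p x - D' x + f x)"
    have cG: "config m n G" using cD' unfolding G_def config_def nu_def f_def by simp
    have G0: "\<forall>c. G c \<ge> 0" using cD' unfolding G_def f_def config_def nu_def by auto
    have "effective m n (\<lambda>x. (D' x - f x) + G x)" by (rule eff_add[OF e1 cG G0])
    moreover have "(\<lambda>x. (D' x - f x) + G x) = nu m n p" unfolding G_def by simp
    ultimately show False using nu_not_eff[OF m inj] by simp
  qed
  then show ?thesis using cf f0 df by blast
qed

lemma R_to_H: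
  assumes m: "1 \<le> m" and n: "1 \<le> n" and cD: "config m n D"
    and f: "config m n f" "\<forall>c. f c \<ge> 0" "degree m n f = int k" "\<not> effective m n (\<lambda>x. D x - f x)"
  shows "\<exists>i\<in>PI m n D. hpos m n i \<le> k"
proof -
  have cDf: "config m n (\<lambda>x. D x - f x)" using cD f(1) unfolding config_def by simp
  obtain p D'' where pD: "inj_on p (V m n)" "config m n D''" "toppling_equiv m n (\<lambda>x. D x - f x) D''"
    "\<forall>x\<in>V m n. D'' x \<le> nu m n p x"
    using noneff_nu[OF m n cDf f(4)] by blast
  define D' where "D' = (\<lambda>x. D'' x + f x)"
  have cD': "config m n D'" using pD(2) f(1) unfolding D'_def config_def by simp
  have te: "toppling_equiv m n D D'"
    using pD(3) unfolding te_iff D'_def by (simp add: algebra_simps)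
  have iP: "(D', p) \<in> PI m n D" using cD' te pD(1) unfolding PI_def by simp
  have "hpos m n (D', p) \<le> (\<Sum>x\<in>V m n. nat (f x))"
    unfolding hpos_def D'_def
  proof (simp, rule sum_mono)
    fix x assume "x \<in> V m n"
    then have "D'' x \<le> nu m n p x" using pD(4) by blast
    then show "nat (D'' x + f x - nu m n p x) \<le> nat (f x)" by simp
  qed
  also have "(\<Sum>x\<in>V m n. nat (f x)) = k"
  proof -
    have "(\<Sum>x\<in>V m n. int (nat (f x))) = (\<Sum>x\<in>V m n. f x)" using f(2) by simp
    then have "int (\<Sum>x\<in>V m n. nat (f x)) = (\<Sum>x\<in>V m n. f x)" by (simp only: of_nat_sum)
    then show ?thesis using f(3) unfolding degree_def by (metis of_nat_eq_iff)
  qed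
  finally show ?thesis using iP by blast
qed

lemma PI_ne: "config m n D \<Longrightarrow> (D, p0) \<in> PI m n D"
  unfolding PI_def using te_refl inj_p0 by simp

lemma rank_char:
  assumes m: "1 \<le> m" and n: "1 \<le> n" and cD: "config m n D"
  shows "rank m n D + 1 = int (LEAST k. \<exists>i\<in>PI m n D. hpos m n i = k)"
proof -
  define R where "R = (LEAST k. \<exists>f. config m n f \<and> (\<forall>c. f c \<ge> 0) \<and> degree m n f = int k \<and> \<not> effective m n (\<lambda>x. D x - f x))"
  define H where "H = (LEAST k. \<exists>i\<in>PI m n D. hpos m n i = k)"
  have "\<exists>i\<in>PI m n D. hpos m n i = H" unfolding H_def
    by (rule LeastI[of _ "hpos m n (D, p0)"]) (use PI_ne[OF cD] in blast)
  then obtain i where i: "i \<in> PI m n D" "hpos m n i = H" by blast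
  have RH: "R \<le> H" unfolding R_def
    by (rule Least_le) (use H_to_R[OF m cD i(1)] i(2) in blast)
  have "\<exists>f. config m n f \<and> (\<forall>c. f c \<ge> 0) \<and> degree m n f = int R \<and> \<not> effective m n (\<lambda>x. D x - f x)"
    unfolding R_def by (rule LeastI[of _ H]) (use H_to_R[OF m cD i(1)] i(2) in blast)
  then obtain f where f: "config m n f" "\<forall>c. f c \<ge> 0" "degree m n f = int R" "\<not> effective m n (\<lambda>x. D x - f x)"
    by blast
  obtain j where j: "j \<in> PI m n D" "hpos m n j \<le> R" using R_to_H[OF m n cD f] by blast
  have "H \<le> hpos m n j" unfolding H_def by (rule Least_le) (use j(1) in blast)
  then have "R = H" using RH j(2) by simp
  then show ?thesis unfolding rank_def R_def[symmetric] H_def[symmetric] by simp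
qed



lemma nu_rev:
  assumes inj: "inj_on p (V m n)" and x: "x \<in> V m n"
  shows "nu m n p x + nu m n (\<lambda>z. - p z) x = Kc m n x"
proof -
  define S1 where "S1 = {y \<in> nb m n x. p y < p x}"
  define S2 where "S2 = {y \<in> nb m n x. - p y < - p x}"
  have d: "S1 \<inter> S2 = {}" unfolding S1_def S2_def by auto
  have u: "S1 \<union> S2 = nb m n x"
  proof
    show "S1 \<union> S2 \<subseteq> nb m n x" unfolding S1_def S2_def by blast
    show "nb m n x \<subseteq> S1 \<union> S2"
    proof
      fix y assume y: "y \<in> nb m n x"
      then have "y \<in> V m n" "y \<noteq> x" using adj_irrefl unfolding nb_def by auto
      then have "p y \<noteq> p x" using inj x by (meson inj_onD)
      then show "y \<in> S1 \<union> S2" using y unfolding S1_def S2_def by auto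
    qed
  qed
  have "card S1 + card S2 = card (nb m n x)"
    using card_Un_disjoint[of S1 S2] d u unfolding S1_def S2_def by simp
  then have "int (card S1) + int (card S2) = gdeg m n x" using card_nb[OF x] by simp
  then show ?thesis using x unfolding nu_def Kc_def S1_def S2_def by simp
qed

definition cnt :: "nat \<Rightarrow> nat \<Rightarrow> (vert \<Rightarrow> int) \<Rightarrow> nat" where
  "cnt m n p = (\<Sum>x\<in>V m n. card {y \<in> nb m n x. p y < p x})"

lemma cnt_rev: "cnt m n p = cnt m n (\<lambda>z. - p z)"
proof -
  define S where "S = (SIGMA x:V m n. {y \<in> nb m n x. p y < p x})"
  define T where "T = (SIGMA x:V m n. {y \<in> nb m n x. - p y < - p x})"
  have cS: "cnt m n p = card S" unfolding cnt_def S_def by (simp add: card_SigmaI)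
  have cT: "cnt m n (\<lambda>z. - p z) = card T" unfolding cnt_def T_def by (simp add: card_SigmaI)
  have "(\<lambda>(x, y). (y, x)) ` S = T"
  proof
    show "(\<lambda>(x, y). (y, x)) ` S \<subseteq> T"
      unfolding S_def T_def by (auto simp: nb_def adj_sym)
    show "T \<subseteq> (\<lambda>(x, y). (y, x)) ` S"
    proof
      fix z assume "z \<in> T"
      then obtain x y where z: "z = (x, y)" "x \<in> V m n" "y \<in> nb m n x" "- p y < - p x" unfolding T_def by blast
      have "(y, x) \<in> S" using z unfolding S_def by (auto simp: nb_def adj_sym)
      then show "z \<in> (\<lambda>(x, y). (y, x)) ` S" using z by force
    qed
  qed
  moreover have "inj_on (\<lambda>(x, y). (y, x)) S" by (auto simp: inj_on_def)
  ultimately have "card T = card S" using card_image by blast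
  then show ?thesis using cS cT by simp
qed

lemma degree_nu_cnt: "degree m n (nu m n p) = int (cnt m n p) - int (card (V m n))"
proof -
  have "degree m n (nu m n p) = (\<Sum>x\<in>V m n. int (card {y \<in> nb m n x. p y < p x}) - 1)"
    unfolding degree_def nu_def by simp
  also have "\<dots> = int (cnt m n p) - int (card (V m n))"
    unfolding cnt_def by (simp add: sum_subtractf of_nat_sum)
  finally show ?thesis .
qed

lemma degree_Kc: "degree m n (Kc m n) = 2 * ((int m - 1) * (int n - 1) - 1)"
proof -
  have "degree m n (Kc m n) = (\<Sum>i=1..m. Kc m n (A i)) + (\<Sum>j=1..n. Kc m n (B j))"
    unfolding degree_def by (rule sum_V)
  also have "(\<Sum>i=1..m. Kc m n (A i)) = (\<Sum>i=1..m. int n - 2)"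
    by (rule sum.cong) (auto simp: Kc_def V_def)
  also have "(\<Sum>j=1..n. Kc m n (B j)) = (\<Sum>j=1..n. int m - 2)"
    by (rule sum.cong) (auto simp: Kc_def V_def)
  finally show ?thesis by (simp add: algebra_simps)
qed

lemma degree_nu:
  assumes "inj_on p (V m n)"
  shows "degree m n (nu m n p) = (int m - 1) * (int n - 1) - 1"
proof -
  have inj': "inj_on (\<lambda>z. - p z) (V m n)" using assms by (auto simp: inj_on_def)
  have "degree m n (nu m n p) + degree m n (nu m n (\<lambda>z. - p z)) = degree m n (Kc m n)"
    unfolding degree_def by (simp add: sum.distrib[symmetric] nu_rev[OF assms])
  moreover have "degree m n (nu m n p) = degree m n (nu m n (\<lambda>z. - p z))"
    unfolding degree_nu_cnt using cnt_rev by metis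
  ultimately show ?thesis using degree_Kc[of m n] by simp
qed

lemma least_shift:
  fixes f g :: "'i \<Rightarrow> nat"
  assumes "i0 \<in> I" "\<And>i. i \<in> I \<Longrightarrow> int (f i) = int (g i) + c"
  shows "int (LEAST k. \<exists>i\<in>I. f i = k) = int (LEAST k. \<exists>i\<in>I. g i = k) + c"
proof -
  define F where "F = (LEAST k. \<exists>i\<in>I. f i = k)"
  define G where "G = (LEAST k. \<exists>i\<in>I. g i = k)"
  have "\<exists>i\<in>I. f i = F" unfolding F_def by (rule LeastI[of _ "f i0"]) (use assms(1) in blast)
  then obtain i where i: "i \<in> I" "f i = F" by blast
  have "\<exists>i\<in>I. g i = G" unfolding G_def by (rule LeastI[of _ "g i0"]) (use assms(1) in blast)
  then obtain j where j: "j \<in> I" "g j = G" by blast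
  have "G \<le> g i" unfolding G_def by (rule Least_le) (use i(1) in blast)
  moreover have "F \<le> f j" unfolding F_def by (rule Least_le) (use j(1) in blast)
  ultimately show ?thesis using assms(2)[OF i(1)] assms(2)[OF j(1)] i(2) j(2)
    unfolding F_def[symmetric] G_def[symmetric] by linarith
qed



lemma te_flip:
  assumes "toppling_equiv m n u v"
  shows "toppling_equiv m n (\<lambda>x. K x - u x) (\<lambda>x. K x - v x)"
proof -
  obtain t where t: "\<And>x. u x - v x = lap m n t x" using assms unfolding te_iff by blast
  have "(K x - u x) - (K x - v x) = lap m n (\<lambda>c. - t c) x" for x
  proof -
    have "(K x - u x) - (K x - v x) = - (u x - v x)" by simp
    then show ?thesis using t[of x] lap_neg[of m n t x] by simp
  qed
  then show ?thesis unfolding te_iff by blast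
qed

lemma config_sub: "config m n u \<Longrightarrow> config m n v \<Longrightarrow> config m n (\<lambda>x. u x - v x)"
  unfolding config_def by simp

lemma PI_flip1:
  assumes cD: "config m n D" and i: "i \<in> PI m n (\<lambda>x. Kc m n x - D x)"
  shows "(\<lambda>x. Kc m n x - fst i x, \<lambda>z. - snd i z) \<in> PI m n D
     \<and> hneg m n (\<lambda>x. Kc m n x - fst i x, \<lambda>z. - snd i z) = hpos m n i"
proof -
  obtain D'' p where ip: "i = (D'', p)" by (cases i)
  have c: "config m n D''" and te: "toppling_equiv m n (\<lambda>x. Kc m n x - D x) D''" and inj: "inj_on p (V m n)"
    using i unfolding ip PI_def by auto
  have c': "config m n (\<lambda>x. Kc m n x - D'' x)" by (rule config_sub[OF config_Kc c])
  have te': "toppling_equiv m n D (\<lambda>x. Kc m n x - D'' x)"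
    using te_flip[OF te, of "Kc m n"] by simp
  have inj': "inj_on (\<lambda>z. - p z) (V m n)" using inj by (auto simp: inj_on_def)
  have "hneg m n (\<lambda>x. Kc m n x - D'' x, \<lambda>z. - p z) = hpos m n (D'', p)"
    unfolding hneg_def hpos_def
  proof (simp, rule sum.cong)
    fix x assume x: "x \<in> V m n"
    show "nat (nu m n (\<lambda>z. - p z) x - (Kc m n x - D'' x)) = nat (D'' x - nu m n p x)"
      using nu_rev[OF inj x] by (simp add: algebra_simps)
  qed simp
  then show ?thesis using c' te' inj' unfolding ip PI_def by simp
qed

lemma PI_flip2:
  assumes cD: "config m n D" and i: "i \<in> PI m n D"
  shows "(\<lambda>x. Kc m n x - fst i x, \<lambda>z. - snd i z) \<in> PI m n (\<lambda>x. Kc m n x - D x)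
     \<and> hpos m n (\<lambda>x. Kc m n x - fst i x, \<lambda>z. - snd i z) = hneg m n i"
proof -
  obtain D' p where ip: "i = (D', p)" by (cases i)
  have c: "config m n D'" and te: "toppling_equiv m n D D'" and inj: "inj_on p (V m n)"
    using i unfolding ip PI_def by auto
  have c': "config m n (\<lambda>x. Kc m n x - D' x)" by (rule config_sub[OF config_Kc c])
  have te': "toppling_equiv m n (\<lambda>x. Kc m n x - D x) (\<lambda>x. Kc m n x - D' x)"
    by (rule te_flip[OF te])
  have inj': "inj_on (\<lambda>z. - p z) (V m n)" using inj by (auto simp: inj_on_def)
  have "hpos m n (\<lambda>x. Kc m n x - D' x, \<lambda>z. - p z) = hneg m n (D', p)"
    unfolding hneg_def hpos_def
  proof (simp, rule sum.cong)
    fix x assume x: "x \<in> V m n"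
    show "nat (Kc m n x - D' x - nu m n (\<lambda>z. - p z) x) = nat (nu m n p x - D' x)"
      using nu_rev[OF inj x] by (simp add: algebra_simps)
  qed simp
  then show ?thesis using c' te' inj' unfolding ip PI_def by simp
qed

lemma rank_char_K:
  assumes m: "1 \<le> m" and n: "1 \<le> n" and cD: "config m n D"
  shows "rank m n (\<lambda>x. Kc m n x - D x) + 1 = int (LEAST k. \<exists>i\<in>PI m n D. hneg m n i = k)"
proof -
  have cKD: "config m n (\<lambda>x. Kc m n x - D x)" by (rule config_sub[OF config_Kc cD])
  have eq: "(\<exists>i\<in>PI m n (\<lambda>x. Kc m n x - D x). hpos m n i = k) = (\<exists>i\<in>PI m n D. hneg m n i = k)" for k
  proof
    assume "\<exists>i\<in>PI m n (\<lambda>x. Kc m n x - D x). hpos m n i = k"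
    then obtain i where "i \<in> PI m n (\<lambda>x. Kc m n x - D x)" "hpos m n i = k" by blast
    then show "\<exists>i\<in>PI m n D. hneg m n i = k" using PI_flip1[OF cD] by metis
  next
    assume "\<exists>i\<in>PI m n D. hneg m n i = k"
    then obtain i where "i \<in> PI m n D" "hneg m n i = k" by blast
    then show "\<exists>i\<in>PI m n (\<lambda>x. Kc m n x - D x). hpos m n i = k" using PI_flip2[OF cD] by metis
  qed
  show ?thesis using rank_char[OF m n cKD] unfolding eq .
qed

lemma RR:
  assumes m: "1 \<le> m" and n: "1 \<le> n" and cD: "config m n D"
  shows "rank m n D - rank m n (\<lambda>x. Kc m n x - D x) = degree m n D - ((int m - 1) * (int n - 1) - 1)"
proof -
  define c where "c = degree m n D - ((int m - 1) * (int n - 1) - 1)"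
  have sh: "int (hpos m n i) = int (hneg m n i) + c" if i: "i \<in> PI m n D" for i
  proof -
    obtain D' p where ip: "i = (D', p)" by (cases i)
    have te: "toppling_equiv m n D D'" and inj: "inj_on p (V m n)"
      using i unfolding ip PI_def by auto
    have "int (hpos m n i) - int (hneg m n i) = (\<Sum>x\<in>V m n. int (nat (D' x - nu m n p x)) - int (nat (nu m n p x - D' x)))"
      unfolding hpos_def hneg_def ip by (simp add: of_nat_sum sum_subtractf)
    also have "\<dots> = (\<Sum>x\<in>V m n. D' x - nu m n p x)" by (rule sum.cong) auto
    also have "\<dots> = degree m n D' - degree m n (nu m n p)" unfolding degree_def by (rule sum_subtractf)
    also have "\<dots> = c" unfolding c_def using te_degree[OF te] degree_nu[OF inj] by simp
    finally show ?thesis by simp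
  qed
  have "int (LEAST k. \<exists>i\<in>PI m n D. hpos m n i = k) = int (LEAST k. \<exists>i\<in>PI m n D. hneg m n i = k) + c"
    by (rule least_shift[OF PI_ne[OF cD] sh])
  then show ?thesis using rank_char[OF m n cD] rank_char_K[OF m n cD] unfolding c_def by linarith
qed



definition rl :: "(nat \<Rightarrow> nat) \<Rightarrow> (nat \<Rightarrow> nat) \<Rightarrow> vert \<Rightarrow> vert" where
  "rl \<alpha> \<beta> x = (case x of A i \<Rightarrow> A (\<alpha> i) | B j \<Rightarrow> B (\<beta> j))"

definition perm_ok :: "nat \<Rightarrow> nat \<Rightarrow> (nat \<Rightarrow> nat) \<Rightarrow> (nat \<Rightarrow> nat) \<Rightarrow> bool" where
  "perm_ok m n \<alpha> \<beta> \<longleftrightarrow> \<alpha> permutes {1..m-1} \<and> \<beta> permutes {1..n}"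

lemma rl_A[simp]: "rl \<alpha> \<beta> (A i) = A (\<alpha> i)" and rl_B[simp]: "rl \<alpha> \<beta> (B j) = B (\<beta> j)"
  by (simp_all add: rl_def)

lemma perm_range:
  fixes \<alpha> :: "nat \<Rightarrow> nat"
  assumes "\<alpha> permutes {1..k}" "k \<le> K"
  shows "(1 \<le> \<alpha> i \<and> \<alpha> i \<le> K) = (1 \<le> i \<and> i \<le> K)"
proof (cases "i \<in> {1..k}")
  case True
  then have "\<alpha> i \<in> {1..k}" using permutes_in_image[OF assms(1)] by blast
  then show ?thesis using True assms(2) by auto
next
  case False
  then show ?thesis using permutes_not_in[OF assms(1)] by simp
qed

lemma perm_ok_inv: "perm_ok m n \<alpha> \<beta> \<Longrightarrow> perm_ok m n (inv \<alpha>) (inv \<beta>)"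
  unfolding perm_ok_def using permutes_inv by blast

lemma perm_ok_comp: "perm_ok m n \<alpha> \<beta> \<Longrightarrow> perm_ok m n \<alpha>' \<beta>' \<Longrightarrow> perm_ok m n (\<alpha> \<circ> \<alpha>') (\<beta> \<circ> \<beta>')"
  unfolding perm_ok_def using permutes_compose by blast

lemma rl_comp: "rl \<alpha> \<beta> (rl \<alpha>' \<beta>' x) = rl (\<alpha> \<circ> \<alpha>') (\<beta> \<circ> \<beta>') x"
  by (cases x) auto

lemma rl_inv1: "perm_ok m n \<alpha> \<beta> \<Longrightarrow> rl (inv \<alpha>) (inv \<beta>) (rl \<alpha> \<beta> x) = x"
  unfolding perm_ok_def by (cases x) (auto simp: permutes_inverses)

lemma rl_inv2: "perm_ok m n \<alpha> \<beta> \<Longrightarrow> rl \<alpha> \<beta> (rl (inv \<alpha>) (inv \<beta>) x) = x"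
  unfolding perm_ok_def by (cases x) (auto simp: permutes_inverses)

lemma rl_inj: "perm_ok m n \<alpha> \<beta> \<Longrightarrow> inj (rl \<alpha> \<beta>)"
  by (metis injI rl_inv1)

lemma rl_V: assumes "perm_ok m n \<alpha> \<beta>" shows "(rl \<alpha> \<beta> x \<in> V m n) = (x \<in> V m n)"
proof -
  have a: "\<alpha> permutes {1..m-1}" and b: "\<beta> permutes {1..n}" using assms unfolding perm_ok_def by auto
  show ?thesis
  proof (cases x)
    case (A i)
    then show ?thesis using perm_range[OF a, of m i] by (auto simp: V_def)
  next
    case (B j)
    then show ?thesis using perm_range[OF b, of n j] by (auto simp: V_def)
  qed
qed

lemma rl_adj: assumes "perm_ok m n \<alpha> \<beta>" shows "adj m n (rl \<alpha> \<beta> x) (rl \<alpha> \<beta> y) = adj m n x y"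
proof -
  have a: "\<alpha> permutes {1..m-1}" and b: "\<beta> permutes {1..n}" using assms unfolding perm_ok_def by auto
  show ?thesis
    using perm_range[OF a, of m] perm_range[OF b, of n] by (cases x; cases y) auto
qed

lemma rl_gdeg: "gdeg m n (rl \<alpha> \<beta> x) = gdeg m n x"
  by (cases x) auto

lemma rl_sink: assumes "perm_ok m n \<alpha> \<beta>" shows "rl \<alpha> \<beta> (sink m) = sink m"
proof -
  have a: "\<alpha> permutes {1..m-1}" using assms unfolding perm_ok_def by auto
  have "m \<notin> {1..m-1}" by auto
  then have "\<alpha> m = m" by (rule permutes_not_in[OF a])
  then show ?thesis by (simp add: sink_def)
qed

lemma rl_bij: assumes "perm_ok m n \<alpha> \<beta>" shows "bij_betw (rl \<alpha> \<beta>) (V m n) (V m n)"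
proof (rule bij_betw_imageI)
  show "inj_on (rl \<alpha> \<beta>) (V m n)" using rl_inj[OF assms] by (simp add: inj_on_def inj_def)
  show "rl \<alpha> \<beta> ` V m n = V m n"
  proof
    show "rl \<alpha> \<beta> ` V m n \<subseteq> V m n" using rl_V[OF assms] by blast
    show "V m n \<subseteq> rl \<alpha> \<beta> ` V m n"
    proof
      fix x assume "x \<in> V m n"
      then have "rl (inv \<alpha>) (inv \<beta>) x \<in> V m n" using rl_V[OF perm_ok_inv[OF assms]] by blast
      then show "x \<in> rl \<alpha> \<beta> ` V m n" using rl_inv2[OF assms, of x] by force
    qed
  qed
qed

lemma rl_Delta: assumes "perm_ok m n \<alpha> \<beta>"
  shows "Delta m n (rl \<alpha> \<beta> c) (rl \<alpha> \<beta> x) = Delta m n c x"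
proof -
  have "(rl \<alpha> \<beta> x = rl \<alpha> \<beta> c) = (x = c)" using rl_inj[OF assms] by (auto dest: injD)
  then show ?thesis unfolding Delta_def using rl_adj[OF assms] rl_gdeg by simp
qed

lemma rl_config: "perm_ok m n \<alpha> \<beta> \<Longrightarrow> config m n u \<Longrightarrow> config m n (u \<circ> rl \<alpha> \<beta>)"
  unfolding config_def using rl_V by fastforce

lemma rl_degree: "perm_ok m n \<alpha> \<beta> \<Longrightarrow> degree m n (u \<circ> rl \<alpha> \<beta>) = degree m n u"
  unfolding degree_def o_def by (rule sum.reindex_bij_betw[OF rl_bij])

lemma rl_lap: assumes "perm_ok m n \<alpha> \<beta>"
  shows "lap m n t (rl \<alpha> \<beta> x) = lap m n (t \<circ> rl \<alpha> \<beta>) x"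
proof -
  have "lap m n (t \<circ> rl \<alpha> \<beta>) x = (\<Sum>c\<in>V m n. t (rl \<alpha> \<beta> c) * Delta m n (rl \<alpha> \<beta> c) (rl \<alpha> \<beta> x))"
    unfolding lap_def by (simp add: rl_Delta[OF assms])
  also have "\<dots> = lap m n t (rl \<alpha> \<beta> x)"
    unfolding lap_def by (rule sum.reindex_bij_betw[OF rl_bij[OF assms]])
  finally show ?thesis by simp
qed

lemma rl_te: "perm_ok m n \<alpha> \<beta> \<Longrightarrow> toppling_equiv m n u v \<Longrightarrow> toppling_equiv m n (u \<circ> rl \<alpha> \<beta>) (v \<circ> rl \<alpha> \<beta>)"
  unfolding te_iff by (metis comp_apply rl_lap)

lemma rl_eff: "perm_ok m n \<alpha> \<beta> \<Longrightarrow> effective m n u \<Longrightarrow> effective m n (u \<circ> rl \<alpha> \<beta>)"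
  unfolding effective_def by (metis comp_apply rl_config rl_te)

lemma rl_cancel: "perm_ok m n \<alpha> \<beta> \<Longrightarrow> (u \<circ> rl \<alpha> \<beta>) \<circ> rl (inv \<alpha>) (inv \<beta>) = u"
  by (auto simp: rl_inv2)

lemma rl_eff_iff: assumes "perm_ok m n \<alpha> \<beta>" shows "effective m n (u \<circ> rl \<alpha> \<beta>) = effective m n u"
  using rl_eff[OF assms] rl_eff[OF perm_ok_inv[OF assms], of "u \<circ> rl \<alpha> \<beta>"] rl_cancel[OF assms] by metis

lemma rl_rank_aux:
  assumes "perm_ok m n \<alpha> \<beta>"
    and "config m n f \<and> (\<forall>c. f c \<ge> 0) \<and> degree m n f = int k \<and> \<not> effective m n (\<lambda>x. u x - f x)"
  shows "config m n (f \<circ> rl \<alpha> \<beta>) \<and> (\<forall>c. (f \<circ> rl \<alpha> \<beta>) c \<ge> 0) \<and> degree m n (f \<circ> rl \<alpha> \<beta>) = int k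
     \<and> \<not> effective m n (\<lambda>x. (u \<circ> rl \<alpha> \<beta>) x - (f \<circ> rl \<alpha> \<beta>) x)"
proof -
  have "(\<lambda>x. (u \<circ> rl \<alpha> \<beta>) x - (f \<circ> rl \<alpha> \<beta>) x) = (\<lambda>x. u x - f x) \<circ> rl \<alpha> \<beta>" by auto
  then show ?thesis using assms rl_config[OF assms(1)] rl_degree[OF assms(1)] rl_eff_iff[OF assms(1)]
    by simp
qed

lemma rl_rank: assumes "perm_ok m n \<alpha> \<beta>" shows "rank m n (u \<circ> rl \<alpha> \<beta>) = rank m n u"
proof -
  have eq: "(\<exists>f. config m n f \<and> (\<forall>c. f c \<ge> 0) \<and> degree m n f = int k \<and> \<not> effective m n (\<lambda>x. (u \<circ> rl \<alpha> \<beta>) x - f x))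
      = (\<exists>f. config m n f \<and> (\<forall>c. f c \<ge> 0) \<and> degree m n f = int k \<and> \<not> effective m n (\<lambda>x. u x - f x))" for k
  proof
    assume "\<exists>f. config m n f \<and> (\<forall>c. f c \<ge> 0) \<and> degree m n f = int k \<and> \<not> effective m n (\<lambda>x. (u \<circ> rl \<alpha> \<beta>) x - f x)"
    then obtain f where f: "config m n f \<and> (\<forall>c. f c \<ge> 0) \<and> degree m n f = int k \<and> \<not> effective m n (\<lambda>x. (u \<circ> rl \<alpha> \<beta>) x - f x)"
      by blast
    have "config m n (f \<circ> rl (inv \<alpha>) (inv \<beta>)) \<and> (\<forall>c. (f \<circ> rl (inv \<alpha>) (inv \<beta>)) c \<ge> 0) \<and> degree m n (f \<circ> rl (inv \<alpha>) (inv \<beta>)) = int k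
     \<and> \<not> effective m n (\<lambda>x. ((u \<circ> rl \<alpha> \<beta>) \<circ> rl (inv \<alpha>) (inv \<beta>)) x - (f \<circ> rl (inv \<alpha>) (inv \<beta>)) x)"
      by (rule rl_rank_aux[OF perm_ok_inv[OF assms] f])
    then show "\<exists>f. config m n f \<and> (\<forall>c. f c \<ge> 0) \<and> degree m n f = int k \<and> \<not> effective m n (\<lambda>x. u x - f x)"
      unfolding rl_cancel[OF assms] by blast
  next
    assume "\<exists>f. config m n f \<and> (\<forall>c. f c \<ge> 0) \<and> degree m n f = int k \<and> \<not> effective m n (\<lambda>x. u x - f x)"
    then obtain f where f: "config m n f \<and> (\<forall>c. f c \<ge> 0) \<and> degree m n f = int k \<and> \<not> effective m n (\<lambda>x. u x - f x)"
      by blast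
    show "\<exists>f. config m n f \<and> (\<forall>c. f c \<ge> 0) \<and> degree m n f = int k \<and> \<not> effective m n (\<lambda>x. (u \<circ> rl \<alpha> \<beta>) x - f x)"
      using rl_rank_aux[OF assms f] by blast
  qed
  show ?thesis unfolding rank_def by (simp only: eq)
qed

lemma DeltaSet_rl: assumes "perm_ok m n \<alpha> \<beta>" "C \<subseteq> V m n"
  shows "DeltaSet m n (rl \<alpha> \<beta> ` C) (rl \<alpha> \<beta> y) = DeltaSet m n C y"
proof -
  have "inj_on (rl \<alpha> \<beta>) C" using rl_inj[OF assms(1)] by (simp add: inj_on_def inj_def)
  then have "DeltaSet m n (rl \<alpha> \<beta> ` C) (rl \<alpha> \<beta> y) = (\<Sum>c\<in>C. Delta m n (rl \<alpha> \<beta> c) (rl \<alpha> \<beta> y))"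
    unfolding DeltaSet_def by (simp add: sum.reindex)
  then show ?thesis unfolding DeltaSet_def by (simp add: rl_Delta[OF assms(1)])
qed

lemma parkingD: "parking m n u \<Longrightarrow> C \<noteq> {} \<Longrightarrow> C \<subseteq> V m n - {sink m} \<Longrightarrow> \<exists>c\<in>V m n - {sink m}. u c - DeltaSet m n C c < 0"
  unfolding parking_def by blast

lemma rl_parking: assumes ok: "perm_ok m n \<alpha> \<beta>" and pu: "parking m n u"
  shows "parking m n (u \<circ> rl \<alpha> \<beta>)"
  unfolding parking_def
proof (intro conjI allI impI ballI)
  have sV: "\<And>c. c \<in> V m n - {sink m} \<Longrightarrow> rl \<alpha> \<beta> c \<in> V m n - {sink m}"
    using rl_V[OF ok] rl_sink[OF ok] rl_inj[OF ok] by (metis Diff_iff injD singleton_iff)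
  fix c assume "c \<in> V m n - {sink m}"
  then show "0 \<le> (u \<circ> rl \<alpha> \<beta>) c" using pu sV unfolding parking_def by simp
next
  have sV: "\<And>c. c \<in> V m n - {sink m} \<Longrightarrow> rl \<alpha> \<beta> c \<in> V m n - {sink m}"
    using rl_V[OF ok] rl_sink[OF ok] rl_inj[OF ok] by (metis Diff_iff injD singleton_iff)
  have sV': "\<And>c. c \<in> V m n - {sink m} \<Longrightarrow> rl (inv \<alpha>) (inv \<beta>) c \<in> V m n - {sink m}"
    using rl_V[OF perm_ok_inv[OF ok]] rl_sink[OF perm_ok_inv[OF ok]] rl_inj[OF perm_ok_inv[OF ok]] by (metis Diff_iff injD singleton_iff)
  fix C assume Cne: "C \<noteq> {}" and CV: "C \<subseteq> V m n - {sink m}"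
  have ne: "rl \<alpha> \<beta> ` C \<noteq> {}" using Cne by blast
  have sub: "rl \<alpha> \<beta> ` C \<subseteq> V m n - {sink m}"
  proof (rule image_subsetI)
    fix c assume "c \<in> C"
    then have "c \<in> V m n - {sink m}" by (rule subsetD[OF CV])
    then show "rl \<alpha> \<beta> c \<in> V m n - {sink m}" by (rule sV)
  qed
  obtain x where x: "x \<in> V m n - {sink m}" "u x - DeltaSet m n (rl \<alpha> \<beta> ` C) x < 0"
    using parkingD[OF pu ne sub] by blast
  define y where "y = rl (inv \<alpha>) (inv \<beta>) x"
  have y: "y \<in> V m n - {sink m}" "rl \<alpha> \<beta> y = x" unfolding y_def using sV'[OF x(1)] rl_inv2[OF ok] by auto
  have "DeltaSet m n (rl \<alpha> \<beta> ` C) x = DeltaSet m n C y" using DeltaSet_rl[OF ok, of C y] CV y(2) by auto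
  then show "\<exists>c\<in>V m n - {sink m}. (u \<circ> rl \<alpha> \<beta>) c - DeltaSet m n C c < 0"
    using x(2) y by (intro bexI[of _ y]) auto
qed

lemma rl_Kc: "perm_ok m n \<alpha> \<beta> \<Longrightarrow> Kc m n (rl \<alpha> \<beta> x) = Kc m n x"
  unfolding Kc_def using rl_V rl_gdeg by simp



lemma sort_ex:
  fixes f :: "nat \<Rightarrow> int"
  shows "\<exists>\<alpha>. \<alpha> permutes {1..k} \<and> (\<forall>i j. 1 \<le> i \<longrightarrow> i \<le> j \<longrightarrow> j \<le> k \<longrightarrow> f (\<alpha> i) \<le> f (\<alpha> j))"
proof (induction k arbitrary: f)
  case 0
  show ?case by (intro exI[of _ id]) (simp add: id_def)
next
  case (Suc k)
  define S where "S = {1..Suc k}"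
  have fS: "finite S" "S \<noteq> {}" unfolding S_def by auto
  define M where "M = Max (f ` S)"
  have "M \<in> f ` S" unfolding M_def using fS by simp
  then obtain j0 where j0: "j0 \<in> S" "f j0 = M" by blast
  have fM: "\<And>i. i \<in> S \<Longrightarrow> f i \<le> f j0" using fS j0(2) unfolding M_def by simp
  define \<tau> where "\<tau> = Transposition.transpose j0 (Suc k)"
  have \<tau>p: "\<tau> permutes S" unfolding \<tau>_def S_def by (rule permutes_swap_id) (use j0(1) S_def in auto)
  obtain \<alpha> where \<alpha>: "\<alpha> permutes {1..k}" "\<forall>i j. 1 \<le> i \<longrightarrow> i \<le> j \<longrightarrow> j \<le> k \<longrightarrow> (f \<circ> \<tau>) (\<alpha> i) \<le> (f \<circ> \<tau>) (\<alpha> j)"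
    using Suc.IH[of "f \<circ> \<tau>"] by blast
  have \<alpha>S: "\<alpha> permutes S" by (rule permutes_subset[OF \<alpha>(1)]) (auto simp: S_def)
  have \<alpha>k: "\<alpha> (Suc k) = Suc k" by (rule permutes_not_in[OF \<alpha>(1)]) simp
  have \<tau>k: "\<tau> (Suc k) = j0" unfolding \<tau>_def by simp
  have "(\<tau> \<circ> \<alpha>) permutes S" by (rule permutes_compose[OF \<alpha>S \<tau>p])
  moreover have "f ((\<tau> \<circ> \<alpha>) i) \<le> f ((\<tau> \<circ> \<alpha>) j)" if "1 \<le> i" "i \<le> j" "j \<le> Suc k" for i j
  proof (cases "j = Suc k")
    case True
    have "i \<in> S" using that unfolding S_def by auto
    then have "\<alpha> i \<in> S" using permutes_in_image[OF \<alpha>S] by blast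
    then have "\<tau> (\<alpha> i) \<in> S" using permutes_in_image[OF \<tau>p] by blast
    then show ?thesis using True \<alpha>k \<tau>k fM by simp
  next
    case False
    then show ?thesis using \<alpha>(2) that by simp
  qed
  ultimately show ?case unfolding S_def by blast
qed

lemma sort_uniq:
  fixes f :: "nat \<Rightarrow> int"
  assumes ap: "\<alpha> permutes {1..k}"
    and s1: "\<forall>i j. 1 \<le> i \<longrightarrow> i \<le> j \<longrightarrow> j \<le> k \<longrightarrow> f i \<le> f j"
    and s2: "\<forall>i j. 1 \<le> i \<longrightarrow> i \<le> j \<longrightarrow> j \<le> k \<longrightarrow> f (\<alpha> i) \<le> f (\<alpha> j)"
  shows "f (\<alpha> i) = f i"
proof (cases "i \<in> {1..k}")
  case False
  then show ?thesis using permutes_not_in[OF ap] by simp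
next
  case True
  define L where "L = [1..<k+1]"
  define xs where "xs = map f L"
  define ys where "ys = map (f \<circ> \<alpha>) L"
  have len: "length L = k" unfolding L_def by simp
  have nthL: "\<And>i. i < k \<Longrightarrow> L ! i = i + 1" unfolding L_def by (simp del: upt_Suc add: nth_upt)
  have sx: "sorted xs" unfolding sorted_iff_nth_mono xs_def using s1 len nthL by auto
  have sy: "sorted ys" unfolding sorted_iff_nth_mono ys_def using s2 len nthL by auto
  have setL: "{1..<k+1} = {1..k}" by auto
  have "mset ys = image_mset f (image_mset \<alpha> (mset L))" unfolding ys_def by (simp add: image_mset.compositionality)
  also have "image_mset \<alpha> (mset L) = mset L"
    unfolding L_def mset_upt setL using permutes_image_mset[OF ap] .
  finally have "mset ys = mset xs" unfolding xs_def by simp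
  then have "sort xs = ys" using sy by (rule properties_for_sort)
  moreover have "sort xs = xs" using sx by (rule sorted_sort_id)
  ultimately have "xs = ys" by simp
  then have "xs ! (i - 1) = ys ! (i - 1)" by simp
  moreover have "i - 1 < k" "L ! (i - 1) = i" using True nthL by auto
  ultimately show ?thesis unfolding xs_def ys_def using len by simp
qed



lemma sorted_ex: "\<exists>\<alpha> \<beta>. perm_ok m n \<alpha> \<beta> \<and> sorted_conf m n (u \<circ> rl \<alpha> \<beta>)"
proof -
  obtain \<alpha> where a: "\<alpha> permutes {1..m-1}"
    "\<forall>i j. 1 \<le> i \<longrightarrow> i \<le> j \<longrightarrow> j \<le> m-1 \<longrightarrow> u (A (\<alpha> i)) \<le> u (A (\<alpha> j))"
    using sort_ex[where f="\<lambda>i. u (A i)" and k="m-1"] by blast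
  obtain \<beta> where b: "\<beta> permutes {1..n}"
    "\<forall>i j. 1 \<le> i \<longrightarrow> i \<le> j \<longrightarrow> j \<le> n \<longrightarrow> u (B (\<beta> i)) \<le> u (B (\<beta> j))"
    using sort_ex[where f="\<lambda>j. u (B j)" and k=n] by blast
  have "perm_ok m n \<alpha> \<beta>" using a(1) b(1) unfolding perm_ok_def by simp
  moreover have "sorted_conf m n (u \<circ> rl \<alpha> \<beta>)" unfolding sorted_conf_def using a(2) b(2) by simp
  ultimately show ?thesis by blast
qed

lemma sorted_uniq:
  assumes ok: "perm_ok m n \<alpha> \<beta>" and s1: "sorted_conf m n u" and s2: "sorted_conf m n (u \<circ> rl \<alpha> \<beta>)"
  shows "u \<circ> rl \<alpha> \<beta> = u"
proof
  fix x
  have a: "\<alpha> permutes {1..m-1}" and b: "\<beta> permutes {1..n}" using ok unfolding perm_ok_def by auto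
  show "(u \<circ> rl \<alpha> \<beta>) x = u x"
  proof (cases x)
    case (A i)
    have "u (A (\<alpha> i)) = u (A i)"
      using sort_uniq[OF a, of "\<lambda>i. u (A i)" i] s1 s2 unfolding sorted_conf_def by simp
    then show ?thesis using A by simp
  next
    case (B j)
    have "u (B (\<beta> j)) = u (B j)"
      using sort_uniq[OF b, of "\<lambda>j. u (B j)" j] s1 s2 unfolding sorted_conf_def by simp
    then show ?thesis using B by simp
  qed
qed

lemma finite_PS:
  assumes m: "1 \<le> m"
  shows "finite (PS m n a b)"
proof -
  define W where "W = V m n - {sink m}"
  define D0 where "D0 = (int m - 1) * (int n - 1) + (b - 1) - a"
  define ext where "ext = (\<lambda>g c. if c \<in> W then g c else if c = sink m then D0 - (\<Sum>c\<in>W. g c) else (0::int))"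
  define T where "T = (\<Pi>\<^sub>E c\<in>W. {0..int (m + n)})"
  have fT: "finite T" unfolding T_def W_def by (intro finite_PiE) auto
  have "PS m n a b \<subseteq> ext ` T"
  proof
    fix u assume "u \<in> PS m n a b"
    then have cu: "config m n u" and pu: "parking m n u" and xu: "xpara m n u = a" and yu: "ypara m n u = b"
      unfolding PS_def by auto
    have deg: "degree m n u = D0" using xu yu unfolding xpara_def ypara_def D0_def by simp
    have bd: "u c \<in> {0..int (m + n)}" if "c \<in> W" for c
    proof -
      have "0 \<le> u c \<and> u c < gdeg m n c" using park_bound[OF pu] that unfolding W_def by blast
      moreover have "gdeg m n c \<le> int (m + n)" by (cases c) auto
      ultimately show ?thesis by simp
    qed
    have "restrict u W \<in> T" unfolding T_def restrict_PiE_iff using bd by blast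
    moreover have "u = ext (restrict u W)"
    proof
      fix c
      show "u c = ext (restrict u W) c"
      proof (cases "c \<in> W")
        case True then show ?thesis unfolding ext_def by simp
      next
        case False
        show ?thesis
        proof (cases "c = sink m")
          case True
          have "u (sink m) = D0 - (\<Sum>c\<in>W. u c)" using degree_split[OF m, of n u] deg unfolding W_def by simp
          moreover have "(\<Sum>c\<in>W. restrict u W c) = (\<Sum>c\<in>W. u c)" by simp
          ultimately show ?thesis using True False unfolding ext_def by simp
        next
          case F2: False
          then have "c \<notin> V m n" using False unfolding W_def by blast
          then show ?thesis using cu False F2 unfolding ext_def config_def by simp
        qed
      qed
    qed
    ultimately show "u \<in> ext ` T" by blast
  qed
  then show ?thesis using fT finite_subset by blast
qed



definition park :: "nat \<Rightarrow> nat \<Rightarrow> (vert \<Rightarrow> int) \<Rightarrow> (vert \<Rightarrow> int)" where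
  "park m n u = (SOME w. config m n w \<and> parking m n w \<and> toppling_equiv m n u w)"

definition srt :: "nat \<Rightarrow> nat \<Rightarrow> (vert \<Rightarrow> int) \<Rightarrow> (vert \<Rightarrow> int)" where
  "srt m n w = (SOME w'. \<exists>\<alpha> \<beta>. perm_ok m n \<alpha> \<beta> \<and> w' = w \<circ> rl \<alpha> \<beta> \<and> sorted_conf m n w')"

definition psi :: "nat \<Rightarrow> nat \<Rightarrow> (vert \<Rightarrow> int) \<Rightarrow> (vert \<Rightarrow> int)" where
  "psi m n u = srt m n (park m n (\<lambda>x. Kc m n x - u x))"

lemma park_prop:
  assumes "1 \<le> m" "1 \<le> n" "config m n u"
  shows "config m n (park m n u) \<and> parking m n (park m n u) \<and> toppling_equiv m n u (park m n u)"
  unfolding park_def by (rule someI_ex[OF park_exists[OF assms]])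

lemma srt_prop: "\<exists>\<alpha> \<beta>. perm_ok m n \<alpha> \<beta> \<and> srt m n w = w \<circ> rl \<alpha> \<beta> \<and> sorted_conf m n (srt m n w)"
proof -
  obtain \<alpha> \<beta> where "perm_ok m n \<alpha> \<beta>" "sorted_conf m n (w \<circ> rl \<alpha> \<beta>)" using sorted_ex by blast
  then have ex: "\<exists>w'. \<exists>\<alpha> \<beta>. perm_ok m n \<alpha> \<beta> \<and> w' = w \<circ> rl \<alpha> \<beta> \<and> sorted_conf m n w'" by blast
  show ?thesis using someI_ex[OF ex] unfolding srt_def[symmetric] by blast
qed

lemma psi_PS:
  assumes m: "1 \<le> m" and n: "1 \<le> n" and uP: "u \<in> PS m n a b"
  shows "psi m n u \<in> PS m n b a \<and> psi m n (psi m n u) = u"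
proof -
  have cu: "config m n u" and pu: "parking m n u" and su: "sorted_conf m n u"
    and xu: "xpara m n u = a" and yu: "ypara m n u = b" using uP unfolding PS_def by auto
  define KU where "KU = (\<lambda>x. Kc m n x - u x)"
  have cKU: "config m n KU" unfolding KU_def by (rule config_sub[OF config_Kc cu])
  define w where "w = park m n KU"
  have cw: "config m n w" and pw: "parking m n w" and tw: "toppling_equiv m n KU w"
    using park_prop[OF m n cKU] unfolding w_def by auto
  obtain \<alpha> \<beta> where ok: "perm_ok m n \<alpha> \<beta>" and pe: "psi m n u = w \<circ> rl \<alpha> \<beta>" and sw': "sorted_conf m n (psi m n u)"
    using srt_prop[of m n w] unfolding psi_def w_def KU_def by blast
  define w' where "w' = psi m n u"
  have cw': "config m n w'" unfolding w'_def pe by (rule rl_config[OF ok cw])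
  have pw': "parking m n w'" unfolding w'_def pe by (rule rl_parking[OF ok pw])
  have rk: "rank m n w' = rank m n KU" unfolding w'_def pe rl_rank[OF ok] using rank_te[OF tw] by simp
  have dg: "degree m n w' = degree m n (Kc m n) - degree m n u"
  proof -
    have "degree m n w' = degree m n KU" unfolding w'_def pe rl_degree[OF ok] using te_degree[OF tw] by simp
    also have "\<dots> = degree m n (Kc m n) - degree m n u" unfolding KU_def degree_def by (rule sum_subtractf)
    finally show ?thesis .
  qed
  have rr: "rank m n u - rank m n KU = degree m n u - ((int m - 1) * (int n - 1) - 1)"
    unfolding KU_def by (rule RR[OF m n cu])
  have dK: "degree m n (Kc m n) = 2 * ((int m - 1) * (int n - 1) - 1)" by (rule degree_Kc)
  have "xpara m n w' = b" using yu rk dg rr dK unfolding xpara_def ypara_def by (simp add: algebra_simps)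
  moreover have "ypara m n w' = a" using xu rk rr unfolding xpara_def ypara_def by (simp add: algebra_simps)
  ultimately have w'P: "w' \<in> PS m n b a" using cw' pw' sw' unfolding PS_def w'_def by simp
  define KW where "KW = (\<lambda>x. Kc m n x - w' x)"
  have cKW: "config m n KW" unfolding KW_def by (rule config_sub[OF config_Kc cw'])
  define z where "z = park m n KW"
  have cz: "config m n z" and pz: "parking m n z" and tz: "toppling_equiv m n KW z"
    using park_prop[OF m n cKW] unfolding z_def by auto
  have "toppling_equiv m n (\<lambda>x. Kc m n x - KU x) (\<lambda>x. Kc m n x - w x)" by (rule te_flip[OF tw])
  moreover have "(\<lambda>x. Kc m n x - KU x) = u" unfolding KU_def by simp
  ultimately have t1: "toppling_equiv m n u (\<lambda>x. Kc m n x - w x)" by simp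
  have "toppling_equiv m n (u \<circ> rl \<alpha> \<beta>) ((\<lambda>x. Kc m n x - w x) \<circ> rl \<alpha> \<beta>)" by (rule rl_te[OF ok t1])
  moreover have "(\<lambda>x. Kc m n x - w x) \<circ> rl \<alpha> \<beta> = KW" unfolding KW_def w'_def pe using rl_Kc[OF ok] by auto
  ultimately have "toppling_equiv m n (u \<circ> rl \<alpha> \<beta>) KW" by simp
  then have t2: "toppling_equiv m n (u \<circ> rl \<alpha> \<beta>) z" using tz by (rule te_trans)
  have zu: "u \<circ> rl \<alpha> \<beta> = z"
    by (rule park_unique[OF m rl_parking[OF ok pu] pz rl_config[OF ok cu] cz t2])
  obtain \<alpha>' \<beta>' where ok': "perm_ok m n \<alpha>' \<beta>'" and pe': "psi m n w' = z \<circ> rl \<alpha>' \<beta>'" and sz: "sorted_conf m n (psi m n w')"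
    using srt_prop[of m n z] unfolding psi_def z_def KW_def by blast
  have "psi m n w' = u \<circ> rl (\<alpha> \<circ> \<alpha>') (\<beta> \<circ> \<beta>')" unfolding pe' zu[symmetric] by (auto simp: rl_comp)
  also have "\<dots> = u"
    by (rule sorted_uniq[OF perm_ok_comp[OF ok ok'] su]) (use sz \<open>psi m n w' = u \<circ> rl (\<alpha> \<circ> \<alpha>') (\<beta> \<circ> \<beta>')\<close> in simp)
  finally show ?thesis using w'P unfolding w'_def by simp
qed

theorem theorem14p1:
  fixes m n :: nat and a b :: int
  assumes "1 \<le> m" and "1 \<le> n"
  shows "finite (PS m n a b) \<and> Kcoeff m n a b = Kcoeff m n b a"
proof
  show "finite (PS m n a b)" by (rule finite_PS[OF assms(1)])
  have bij: "bij_betw (psi m n) (PS m n a b) (PS m n b a)"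
  proof (rule bij_betw_imageI)
    show "inj_on (psi m n) (PS m n a b)"
    proof (rule inj_onI)
      fix x y assume "x \<in> PS m n a b" "y \<in> PS m n a b" "psi m n x = psi m n y"
      then show "x = y" using psi_PS[OF assms] by metis
    qed
    show "psi m n ` PS m n a b = PS m n b a"
    proof
      show "psi m n ` PS m n a b \<subseteq> PS m n b a" using psi_PS[OF assms] by blast
      show "PS m n b a \<subseteq> psi m n ` PS m n a b"
      proof
        fix v assume "v \<in> PS m n b a"
        then have "psi m n v \<in> PS m n a b" "psi m n (psi m n v) = v" using psi_PS[OF assms] by auto
        then show "v \<in> psi m n ` PS m n a b" by force
      qed
    qed
  qed
  show "Kcoeff m n a b = Kcoeff m n b a" unfolding Kcoeff_def by (rule bij_betw_same_card[OF bij])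
qed

end
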